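(* Let $p$ be a prime and let $\Gamma$ be a countably infinite subgroup of $\bigoplus_{i \in B_1} \mathbb{Q} \oplus \bigoplus_{i \in B_2} \mathcal{C}(p^\infty)$ (for index sets $B_1, B_2$), regarded as a discrete abelian group. Then $\Gamma$ contains an infinite $p$-PR set if and only if $\Gamma$ contains an infinite independent set.
   Context: $\mathcal{C}(p^\infty)$ denotes the group of all $p^m$-th roots of unity, $m \ge 1$. For a discrete abelian group $\Delta$ with compact dual $\widehat{\Delta}$ and $N \in \mathbb{N}$, a subset $E \subset \Delta$ is $N$-PR if for every function $\varphi: E \to \mathbb{Z}_N$ (the $N$-th roots of unity in the unit circle) there exists $x \in \widehat{\Delta}$ with $\varphi(\gamma) = \gamma(x)$ for all $\gamma \in E$. A set $E$ in an abelian group (written multiplicatively) is independent if whenever $\gamma_1,\dots,\gamma_n \in E$ are distinct, $m_i \in \mathbb{Z}$ and $\prod_i \gamma_i^{m_i} = 1$, then $\gamma_i^{m_i} = 1$ for all $i$. *)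

theory Defs
  imports "HOL-Algebra.Algebra" "HOL-Computational_Algebra.Primes" Complex_Main
begin

definition Cpinf :: "nat \<Rightarrow> complex set" where
  "Cpinf p = {z. \<exists>m\<ge>1. z ^ (p ^ m) = 1}"

text \<open>An element is a pair (f, g) of finitely supported families; the group law is
  componentwise addition on the Q-part and componentwise multiplication of roots of unity.\<close>
definition mixed_sum_group ::
  "nat \<Rightarrow> 'a set \<Rightarrow> 'b set \<Rightarrow> (('a \<Rightarrow> rat) \<times> ('b \<Rightarrow> complex)) monoid" where
  "mixed_sum_group p B1 B2 =
     \<lparr> carrier = {(f, g). (\<forall>i. i \<notin> B1 \<longrightarrow> f i = 0) \<and> finite {i. f i \<noteq> 0}
                      \<and> (\<forall>i\<in>B2. g i \<in> Cpinf p) \<and> (\<forall>i. i \<notin> B2 \<longrightarrow> g i = 1)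
                      \<and> finite {i. g i \<noteq> 1}},
       monoid.mult = (\<lambda>(f, g) (f', g'). (\<lambda>i. f i + f' i, \<lambda>i. g i * g' i)),
       one = (\<lambda>_. 0, \<lambda>_. 1) \<rparr>"

definition character :: "('g, 'm) monoid_scheme \<Rightarrow> ('g \<Rightarrow> complex) \<Rightarrow> bool" where
  "character G \<chi> \<longleftrightarrow>
     (\<forall>x\<in>carrier G. cmod (\<chi> x) = 1) \<and>
     (\<forall>x\<in>carrier G. \<forall>y\<in>carrier G. \<chi> (x \<otimes>\<^bsub>G\<^esub> y) = \<chi> x * \<chi> y)"

definition NPR :: "('g, 'm) monoid_scheme \<Rightarrow> nat \<Rightarrow> 'g set \<Rightarrow> bool" where
  "NPR G N E \<longleftrightarrow> E \<subseteq> carrier G \<and>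
     (\<forall>\<phi> :: 'g \<Rightarrow> complex. (\<forall>\<gamma>\<in>E. \<phi> \<gamma> ^ N = 1) \<longrightarrow>
        (\<exists>\<chi>. character G \<chi> \<and> (\<forall>\<gamma>\<in>E. \<chi> \<gamma> = \<phi> \<gamma>)))"

definition independent_set :: "('g, 'm) monoid_scheme \<Rightarrow> 'g set \<Rightarrow> bool" where
  "independent_set G E \<longleftrightarrow> E \<subseteq> carrier G \<and>
     (\<forall>F (m :: 'g \<Rightarrow> int). finite F \<and> F \<subseteq> E \<and>
        finprod G (\<lambda>\<gamma>. \<gamma> [^]\<^bsub>G\<^esub> m \<gamma>) F = \<one>\<^bsub>G\<^esub> \<longrightarrow>
        (\<forall>\<gamma>\<in>F. \<gamma> [^]\<^bsub>G\<^esub> m \<gamma> = \<one>\<^bsub>G\<^esub>))"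

end

theory Submission
  imports Defs
begin


lemma Cpinf_nz: "p > 0 \<Longrightarrow> z \<in> Cpinf p \<Longrightarrow> z \<noteq> 0"
  unfolding Cpinf_def by (auto simp: power_0_left)

lemma Cpinf_norm: assumes "p > 0" "z \<in> Cpinf p" shows "norm z = 1"
proof -
  obtain m where m: "m \<ge> 1" "z ^ (p ^ m) = 1" using assms unfolding Cpinf_def by auto
  have p0: "p ^ m > 0" using assms by simp
  have "norm z ^ (p ^ m) = 1" using m by (metis norm_one norm_power)
  thus ?thesis using p0 power_eq_imp_eq_base[of "norm z" "p^m" 1] by simp
qed

lemma Cpinf_mult: assumes "z \<in> Cpinf p" "w \<in> Cpinf p" shows "z * w \<in> Cpinf p"
proof -
  obtain m where m: "m \<ge> 1" "z ^ (p ^ m) = 1" using assms unfolding Cpinf_def by auto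
  obtain n where n: "n \<ge> 1" "w ^ (p ^ n) = 1" using assms unfolding Cpinf_def by auto
  have "(z * w) ^ (p ^ (m + n)) = (z ^ (p ^ m)) ^ (p ^ n) * (w ^ (p ^ n)) ^ (p ^ m)"
    by (simp add: power_mult_distrib power_add power_mult[symmetric] mult.commute)
  also have "\<dots> = 1" using m n by simp
  finally show ?thesis unfolding Cpinf_def using m by (intro CollectI exI[of _ "m+n"]) auto
qed

lemma Cpinf_inverse: assumes "z \<in> Cpinf p" shows "inverse z \<in> Cpinf p"
  using assms unfolding Cpinf_def by (auto simp: power_inverse)

lemma Cpinf_pow: assumes "z \<in> Cpinf p" shows "\<exists>m\<ge>1. z ^ (p ^ m) = 1"
  using assms unfolding Cpinf_def by auto

lemma msg_carrier:
  "x \<in> carrier (mixed_sum_group p B1 B2) \<longleftrightarrow>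
     (\<forall>i. i \<notin> B1 \<longrightarrow> fst x i = 0) \<and> finite {i. fst x i \<noteq> 0}
     \<and> (\<forall>i\<in>B2. snd x i \<in> Cpinf p) \<and> (\<forall>i. i \<notin> B2 \<longrightarrow> snd x i = 1)
     \<and> finite {i. snd x i \<noteq> 1}"
  by (cases x) (simp add: mixed_sum_group_def)

lemma msg_mult [simp]: "x \<otimes>\<^bsub>mixed_sum_group p B1 B2\<lparr>carrier := H\<rparr>\<^esub> y = (\<lambda>i. fst x i + fst y i, \<lambda>i. snd x i * snd y i)"
  by (cases x; cases y) (simp add: mixed_sum_group_def)

lemma msg_mult' [simp]: "x \<otimes>\<^bsub>mixed_sum_group p B1 B2\<^esub> y = (\<lambda>i. fst x i + fst y i, \<lambda>i. snd x i * snd y i)"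
  by (cases x; cases y) (simp add: mixed_sum_group_def)

lemma msg_one [simp]: "\<one>\<^bsub>mixed_sum_group p B1 B2\<lparr>carrier := H\<rparr>\<^esub> = (\<lambda>_. 0, \<lambda>_. 1)"
  by (simp add: mixed_sum_group_def)

lemma msg_one' [simp]: "\<one>\<^bsub>mixed_sum_group p B1 B2\<^esub> = (\<lambda>_. 0, \<lambda>_. 1)"
  by (simp add: mixed_sum_group_def)

lemma msg_snd_nz: "p > 0 \<Longrightarrow> x \<in> carrier (mixed_sum_group p B1 B2) \<Longrightarrow> snd x i \<noteq> 0"
  unfolding msg_carrier by (metis Cpinf_nz zero_neq_one)

lemma msg_snd_norm: "p > 0 \<Longrightarrow> x \<in> carrier (mixed_sum_group p B1 B2) \<Longrightarrow> norm (snd x i) = 1"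
  unfolding msg_carrier by (metis Cpinf_norm norm_one)

lemma msg_group: assumes "p > 0" shows "group (mixed_sum_group p B1 B2)"
proof (rule groupI)
  let ?G = "mixed_sum_group p B1 B2"
  fix x y assume x: "x \<in> carrier ?G" and y: "y \<in> carrier ?G"
  have "{i. fst x i + fst y i \<noteq> 0} \<subseteq> {i. fst x i \<noteq> 0} \<union> {i. fst y i \<noteq> 0}" by auto
  moreover have "{i. snd x i * snd y i \<noteq> 1} \<subseteq> {i. snd x i \<noteq> 1} \<union> {i. snd y i \<noteq> 1}" by auto
  ultimately show "x \<otimes>\<^bsub>?G\<^esub> y \<in> carrier ?G" using x y unfolding msg_carrier
    by (auto intro: Cpinf_mult finite_subset)
next
  show "\<one>\<^bsub>mixed_sum_group p B1 B2\<^esub> \<in> carrier (mixed_sum_group p B1 B2)"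
    unfolding msg_carrier using \<open>p > 0\<close> by (auto simp: Cpinf_def)
next
  fix x y z show "x \<otimes>\<^bsub>mixed_sum_group p B1 B2\<^esub> y \<otimes>\<^bsub>mixed_sum_group p B1 B2\<^esub> z =
           x \<otimes>\<^bsub>mixed_sum_group p B1 B2\<^esub> (y \<otimes>\<^bsub>mixed_sum_group p B1 B2\<^esub> z)"
    by (simp add: add.assoc mult.assoc)
next
  fix x show "\<one>\<^bsub>mixed_sum_group p B1 B2\<^esub> \<otimes>\<^bsub>mixed_sum_group p B1 B2\<^esub> x = x" by simp
next
  let ?G = "mixed_sum_group p B1 B2"
  fix x assume x: "x \<in> carrier ?G"
  let ?y = "(\<lambda>i. - fst x i, \<lambda>i. inverse (snd x i))"
  have "?y \<in> carrier ?G" using x unfolding msg_carrier by (auto intro: Cpinf_inverse)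
  moreover have "?y \<otimes>\<^bsub>?G\<^esub> x = \<one>\<^bsub>?G\<^esub>" using msg_snd_nz[OF assms x] by auto
  ultimately show "\<exists>y\<in>carrier ?G. y \<otimes>\<^bsub>?G\<^esub> x = \<one>\<^bsub>?G\<^esub>" by blast
qed

lemma msg_inv: assumes "p > 0" "x \<in> carrier (mixed_sum_group p B1 B2)"
  shows "inv\<^bsub>mixed_sum_group p B1 B2\<^esub> x = (\<lambda>i. - fst x i, \<lambda>i. inverse (snd x i))"
proof -
  let ?G = "mixed_sum_group p B1 B2"
  let ?y = "(\<lambda>i. - fst x i, \<lambda>i. inverse (snd x i))"
  have "?y \<in> carrier ?G" using assms(2) unfolding msg_carrier by (auto intro: Cpinf_inverse)
  moreover have "?y \<otimes>\<^bsub>?G\<^esub> x = \<one>\<^bsub>?G\<^esub>" using msg_snd_nz[OF assms(1) assms(2)] by auto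
  ultimately show ?thesis using group.inv_equality[OF msg_group[OF assms(1)]] assms(2) by blast
qed

lemma msg_nat_pow: "x [^]\<^bsub>mixed_sum_group p B1 B2\<lparr>carrier := H\<rparr>\<^esub> (n::nat) = (\<lambda>i. of_nat n * fst x i, \<lambda>i. snd x i ^ n)"
  by (induct n) (auto simp: algebra_simps)

lemma msg_nat_pow': "x [^]\<^bsub>mixed_sum_group p B1 B2\<^esub> (n::nat) = (\<lambda>i. of_nat n * fst x i, \<lambda>i. snd x i ^ n)"
  by (induct n) (auto simp: algebra_simps)

lemma msg_int_pow': assumes "p > 0" "x \<in> carrier (mixed_sum_group p B1 B2)"
  shows "x [^]\<^bsub>mixed_sum_group p B1 B2\<^esub> (m::int) = (\<lambda>i. of_int m * fst x i, \<lambda>i. snd x i powi m)"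
proof (cases "m < 0")
  case True
  let ?G = "mixed_sum_group p B1 B2"
  have xc: "x [^]\<^bsub>?G\<^esub> nat (-m) \<in> carrier ?G"
    by (metis monoid.nat_pow_closed group.is_monoid msg_group[OF assms(1)] assms(2))
  have e: "x [^]\<^bsub>?G\<^esub> nat (-m) = (\<lambda>i. of_nat (nat (-m)) * fst x i, \<lambda>i. snd x i ^ nat (-m))"
    by (rule msg_nat_pow')
  show ?thesis using True unfolding int_pow_def2
    apply (simp only: if_True msg_inv[OF assms(1) xc])
    apply (simp add: e power_int_def fun_eq_iff power_inverse)
    done
next
  case False
  then show ?thesis unfolding int_pow_def2 by (auto simp: msg_nat_pow' power_int_def fun_eq_iff)
qed


locale msgctx =
  fixes p :: nat and B1 :: "'a set" and B2 :: "'b set"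
    and \<Gamma> :: "(('a \<Rightarrow> rat) \<times> ('b \<Rightarrow> complex)) set"
  assumes pp: "Factorial_Ring.prime p" and sub: "subgroup \<Gamma> (mixed_sum_group p B1 B2)"
begin

abbreviation "G \<equiv> mixed_sum_group p B1 B2"
abbreviation "Gm \<equiv> G\<lparr>carrier := \<Gamma>\<rparr>"

lemma p_pos: "p > 0" using pp prime_gt_0_nat by blast
lemma p_gt1: "p > 1" using pp prime_gt_1_nat by blast

lemma grpG: "group G" using msg_group[OF p_pos] .

lemma inG: "x \<in> \<Gamma> \<Longrightarrow> x \<in> carrier G" using subgroup.subset[OF sub] by blast

lemma Gm_carrier [simp]: "carrier Gm = \<Gamma>" by simp

lemma mclosed: "x \<in> \<Gamma> \<Longrightarrow> y \<in> \<Gamma> \<Longrightarrow> (\<lambda>i. fst x i + fst y i, \<lambda>i. snd x i * snd y i) \<in> \<Gamma>"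
  using subgroup.m_closed[OF sub, of x y] by simp

lemma oneclosed: "(\<lambda>_. 0, \<lambda>_. 1) \<in> \<Gamma>"
  using subgroup.one_closed[OF sub] by simp

lemma grpGm: "group Gm" using subgroup.subgroup_is_group[OF sub grpG] .

lemma cgrp: "comm_group Gm"
proof -
  interpret g: group Gm by (rule grpGm)
  show ?thesis
    by (rule g.group_comm_groupI) (auto simp: add.commute mult.commute)
qed

lemma intpow: "x \<in> \<Gamma> \<Longrightarrow> x [^]\<^bsub>Gm\<^esub> (m::int) = (\<lambda>i. of_int m * fst x i, \<lambda>i. snd x i powi m)"
  using group.int_pow_consistent[OF grpG sub, of x m] msg_int_pow'[OF p_pos inG] by simp

lemma intpow_closed: "x \<in> \<Gamma> \<Longrightarrow> (\<lambda>i. of_int m * fst x i, \<lambda>i. snd x i powi m) \<in> \<Gamma>"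
  using group.int_pow_closed[OF grpGm, of x m] intpow[of x m] by simp

lemma natpow_closed: "x \<in> \<Gamma> \<Longrightarrow> (\<lambda>i. of_nat n * fst x i, \<lambda>i. snd x i ^ n) \<in> \<Gamma>"
  using intpow_closed[of x "int n"] by simp

lemma powc: "x \<in> \<Gamma> \<Longrightarrow> x [^]\<^bsub>Gm\<^esub> (k::int) \<in> \<Gamma>"
  using group.int_pow_closed[OF grpGm, of x k] by simp

lemma finprod_formula:
  assumes "finite F" "F \<subseteq> \<Gamma>"
  shows "finprod Gm (\<lambda>\<gamma>. \<gamma> [^]\<^bsub>Gm\<^esub> (m \<gamma>::int)) F =
    (\<lambda>i. \<Sum>\<gamma>\<in>F. of_int (m \<gamma>) * fst \<gamma> i, \<lambda>i. \<Prod>\<gamma>\<in>F. snd \<gamma> i powi m \<gamma>)"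
  using assms
proof (induct F rule: finite_induct)
  case empty
  then show ?case using comm_monoid.finprod_empty[OF comm_group.axioms(1)[OF cgrp]] by simp
next
  case (insert a F)
  interpret c: comm_group Gm by (rule cgrp)
  have "finprod Gm (\<lambda>\<gamma>. \<gamma> [^]\<^bsub>Gm\<^esub> (m \<gamma>::int)) (insert a F)
     = a [^]\<^bsub>Gm\<^esub> m a \<otimes>\<^bsub>Gm\<^esub> finprod Gm (\<lambda>\<gamma>. \<gamma> [^]\<^bsub>Gm\<^esub> (m \<gamma>::int)) F"
    using insert by (intro c.finprod_insert) (auto intro!: powc)
  then show ?case using insert by (simp add: intpow)
qed

lemma finprod_closed:
  assumes "finite F" "F \<subseteq> \<Gamma>"
  shows "(\<lambda>i. \<Sum>\<gamma>\<in>F. of_int (m \<gamma>) * fst \<gamma> i, \<lambda>i. \<Prod>\<gamma>\<in>F. snd \<gamma> i powi m \<gamma>) \<in> \<Gamma>"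
proof -
  interpret c: comm_group Gm by (rule cgrp)
  have "finprod Gm (\<lambda>\<gamma>. \<gamma> [^]\<^bsub>Gm\<^esub> (m \<gamma>::int)) F \<in> carrier Gm"
    using assms by (intro c.finprod_closed) (auto intro!: powc)
  thus ?thesis using finprod_formula[OF assms] by simp
qed

lemma char_norm: "character Gm \<chi> \<Longrightarrow> x \<in> \<Gamma> \<Longrightarrow> norm (\<chi> x) = 1"
  unfolding character_def by simp

lemma char_mult: "character Gm \<chi> \<Longrightarrow> x \<in> \<Gamma> \<Longrightarrow> y \<in> \<Gamma> \<Longrightarrow> \<chi> (x \<otimes>\<^bsub>Gm\<^esub> y) = \<chi> x * \<chi> y"
  unfolding character_def by simp

lemma char_one: assumes "character Gm \<chi>" shows "\<chi> (\<lambda>_. 0, \<lambda>_. 1) = 1"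
proof -
  define e1 where "e1 = ((\<lambda>_. 0, \<lambda>_. 1) :: ('a \<Rightarrow> rat) \<times> ('b \<Rightarrow> complex))"
  have oc: "e1 \<in> \<Gamma>" unfolding e1_def by (rule oneclosed)
  have e: "(\<lambda>i. fst e1 i + fst e1 i, \<lambda>i. snd e1 i * snd e1 i) = e1" unfolding e1_def by simp
  have "\<chi> e1 = \<chi> e1 * \<chi> e1" using char_mult[OF assms oc oc] e by simp
  moreover have "norm (\<chi> e1) = 1" using assms oc unfolding character_def by simp
  ultimately have "\<chi> e1 * 1 = \<chi> e1 * \<chi> e1" "\<chi> e1 \<noteq> 0" by auto
  hence "\<chi> e1 = 1" by (metis mult_left_cancel)
  thus ?thesis unfolding e1_def .
qed

lemma char_natpow: assumes "character Gm \<chi>" "x \<in> \<Gamma>"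
  shows "\<chi> (x [^]\<^bsub>Gm\<^esub> (n::nat)) = \<chi> x ^ n"
proof (induct n)
  case 0 then show ?case using char_one[OF assms(1)] by simp
next
  case (Suc n)
  interpret g: group Gm by (rule grpGm)
  have "x [^]\<^bsub>Gm\<^esub> n \<in> \<Gamma>" using g.nat_pow_closed[of x n] assms(2) by simp
  then show ?case using Suc char_mult[OF assms(1) _ assms(2)] by (simp del: msg_mult)
qed

lemma char_inv: assumes "character Gm \<chi>" "x \<in> \<Gamma>"
  shows "\<chi> (inv\<^bsub>Gm\<^esub> x) = inverse (\<chi> x)"
proof -
  interpret g: group Gm by (rule grpGm)
  have i: "inv\<^bsub>Gm\<^esub> x \<in> \<Gamma>" using g.inv_closed[of x] assms(2) by simp
  have "\<chi> (inv\<^bsub>Gm\<^esub> x \<otimes>\<^bsub>Gm\<^esub> x) = 1" using g.l_inv[of x] assms char_one by simp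
  hence "\<chi> (inv\<^bsub>Gm\<^esub> x) * \<chi> x = 1" using char_mult[OF assms(1) i assms(2)] by simp
  thus ?thesis by (metis inverse_unique mult.commute)
qed

lemma char_intpow: assumes "character Gm \<chi>" "x \<in> \<Gamma>"
  shows "\<chi> (x [^]\<^bsub>Gm\<^esub> (m::int)) = \<chi> x powi m"
proof -
  interpret g: group Gm by (rule grpGm)
  show ?thesis
  proof (cases "m < 0")
    case True
    have c: "x [^]\<^bsub>Gm\<^esub> nat (-m) \<in> \<Gamma>" using g.nat_pow_closed[of x] assms(2) by simp
    have "x [^]\<^bsub>Gm\<^esub> m = inv\<^bsub>Gm\<^esub> (x [^]\<^bsub>Gm\<^esub> nat (-m))" using True by (simp only: int_pow_def2 if_True)
    also have "\<chi> \<dots> = inverse (\<chi> x ^ nat (-m))" by (simp only: char_inv[OF assms(1) c] char_natpow[OF assms])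
    finally show ?thesis using True by (simp add: power_int_def power_inverse)
  next
    case False
    have "x [^]\<^bsub>Gm\<^esub> m = x [^]\<^bsub>Gm\<^esub> nat m" using False by (simp only: int_pow_def2 if_False)
    hence "\<chi> (x [^]\<^bsub>Gm\<^esub> m) = \<chi> x ^ nat m" using char_natpow[OF assms, of "nat m"] by (simp only:)
    then show ?thesis using False by (simp add: power_int_def)
  qed
qed

lemma char_finprod:
  assumes "character Gm \<chi>" "finite F" "F \<subseteq> \<Gamma>"
  shows "\<chi> (finprod Gm (\<lambda>\<gamma>. \<gamma> [^]\<^bsub>Gm\<^esub> (m \<gamma>::int)) F) = (\<Prod>\<gamma>\<in>F. \<chi> \<gamma> powi m \<gamma>)"
  using assms(2,3)
proof (induct F rule: finite_induct)
  case empty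
  then show ?case using char_one[OF assms(1)] by (simp add: comm_monoid.finprod_empty[OF comm_group.axioms(1)[OF cgrp]])
next
  case (insert a F)
  interpret c: comm_group Gm by (rule cgrp)
  have "finprod Gm (\<lambda>\<gamma>. \<gamma> [^]\<^bsub>Gm\<^esub> (m \<gamma>::int)) (insert a F)
     = a [^]\<^bsub>Gm\<^esub> m a \<otimes>\<^bsub>Gm\<^esub> finprod Gm (\<lambda>\<gamma>. \<gamma> [^]\<^bsub>Gm\<^esub> (m \<gamma>::int)) F"
    using insert by (intro c.finprod_insert) (auto intro!: powc)
  moreover have "a [^]\<^bsub>Gm\<^esub> m a \<in> \<Gamma>" using insert powc by simp
  moreover have "(\<lambda>\<gamma>. \<gamma> [^]\<^bsub>Gm\<^esub> (m \<gamma>::int)) \<in> F \<rightarrow> carrier Gm"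
    using insert powc by auto
  hence "finprod Gm (\<lambda>\<gamma>. \<gamma> [^]\<^bsub>Gm\<^esub> (m \<gamma>::int)) F \<in> \<Gamma>"
    using c.finprod_closed by simp
  ultimately show ?case using insert char_mult[OF assms(1)] char_intpow[OF assms(1)]
    by (simp del: msg_mult)
qed

end


lemma cis_root_powi_dvd:
  assumes "p > 0" "cis (2 * pi / real p) powi m = 1" shows "int p dvd m"
proof -
  have "cis (of_int m * (2 * pi / real p)) = 1" using assms(2) by (simp add: cis_power_int)
  hence "cos (of_int m * (2 * pi / real p)) = 1" by (metis cis.sel(1) one_complex.sel(1))
  then obtain n :: int where n: "of_int m * (2 * pi / real p) = of_int n * 2 * pi"
    using cos_one_2pi_int by blast
  hence "real_of_int m = of_int n * real p" using assms(1) by (simp add: field_simps)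
  hence "m = n * int p" by (metis of_int_eq_iff of_int_mult of_int_of_nat_eq)
  thus ?thesis by simp
qed

lemma cis_root_pow: "p > 0 \<Longrightarrow> cis (2 * pi / real p) ^ p = 1"
  by (simp add: DeMoivre)

lemma root_powi_dvd:
  fixes z :: complex
  assumes pr: "Factorial_Ring.prime p" and z: "z ^ (p ^ k) = 1" "z powi m = 1" "z \<noteq> 1"
  shows "int p dvd m"
proof (rule ccontr)
  assume nd: "\<not> int p dvd m"
  have "Factorial_Ring.prime (int p)" using pr by simp
  hence "coprime (int p) m" using nd prime_imp_coprime by blast
  hence "coprime m (int p ^ k)" by (simp add: coprime_commute)
  hence g: "gcd m (int p ^ k) = 1" by simp
  obtain u v where uv: "u * m + v * int p ^ k = 1" using bezout_int[of m "int p ^ k"] g by auto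
  have pk: "p ^ k > 0" using pr prime_gt_0_nat by simp
  have z0: "z \<noteq> 0" using z(1) pk by (metis power_0_left less_irrefl zero_neq_one)
  have zk: "z powi (int p ^ k) = 1" using z(1) by (metis of_nat_power power_int_of_nat)
  have "z = z powi (u * m + v * int p ^ k)" using uv by simp
  also have "\<dots> = (z powi (m * u)) * (z powi (int p ^ k * v))" using z0
    by (simp add: power_int_add mult.commute)
  also have "\<dots> = 1" by (simp add: power_int_mult z(2) zk)
  finally show False using z(3) by simp
qed

context msgctx begin

definition WI :: "(('a \<Rightarrow> rat) \<times> ('b \<Rightarrow> complex)) set \<Rightarrow> bool" where
  "WI E \<longleftrightarrow> E \<subseteq> \<Gamma> \<and> (\<forall>F (m :: _ \<Rightarrow> int). finite F \<and> F \<subseteq> E \<and>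
        finprod Gm (\<lambda>\<gamma>. \<gamma> [^]\<^bsub>Gm\<^esub> m \<gamma>) F = \<one>\<^bsub>Gm\<^esub> \<longrightarrow> (\<forall>\<gamma>\<in>F. int p dvd m \<gamma>))"

lemma prod_single:
  assumes "finite F" "\<gamma>0 \<in> F" "\<And>\<gamma>. \<gamma> \<in> F \<Longrightarrow> \<gamma> \<noteq> \<gamma>0 \<Longrightarrow> f \<gamma> = (1::complex)"
  shows "(\<Prod>\<gamma>\<in>F. f \<gamma>) = f \<gamma>0"
proof -
  have "(\<Prod>\<gamma>\<in>F. f \<gamma>) = f \<gamma>0 * (\<Prod>\<gamma>\<in>F - {\<gamma>0}. f \<gamma>)" by (rule prod.remove[OF assms(1,2)])
  also have "(\<Prod>\<gamma>\<in>F - {\<gamma>0}. f \<gamma>) = 1" using assms(3) by (intro prod.neutral) auto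
  finally show ?thesis by simp
qed

lemma char_rel:
  assumes "character Gm \<chi>" "finite F" "F \<subseteq> \<Gamma>" "finprod Gm (\<lambda>\<gamma>. \<gamma> [^]\<^bsub>Gm\<^esub> m \<gamma>) F = \<one>\<^bsub>Gm\<^esub>"
  shows "(\<Prod>\<gamma>\<in>F. \<chi> \<gamma> powi m \<gamma>) = 1"
proof -
  have "(\<Prod>\<gamma>\<in>F. \<chi> \<gamma> powi m \<gamma>) = \<chi> (finprod Gm (\<lambda>\<gamma>. \<gamma> [^]\<^bsub>Gm\<^esub> m \<gamma>) F)"
    using char_finprod[OF assms(1-3), of m] by simp
  also have "\<dots> = \<chi> (\<lambda>_. 0, \<lambda>_. 1)" using assms(4) by (simp only: msg_one)
  also have "\<dots> = 1" by (rule char_one[OF assms(1)])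
  finally show ?thesis .
qed

lemma NPR_WI: assumes "NPR Gm p E" shows "WI E"
  unfolding WI_def
proof (intro conjI allI impI ballI)
  show "E \<subseteq> \<Gamma>" using assms unfolding NPR_def by simp
  fix F and m :: "_ \<Rightarrow> int" and \<gamma>0
  assume A: "finite F \<and> F \<subseteq> E \<and> finprod Gm (\<lambda>\<gamma>. \<gamma> [^]\<^bsub>Gm\<^esub> m \<gamma>) F = \<one>\<^bsub>Gm\<^esub>" and g0: "\<gamma>0 \<in> F"
  define \<omega> where "\<omega> = cis (2 * pi / real p)"
  define \<phi> where "\<phi> = (\<lambda>\<gamma>. if \<gamma> = \<gamma>0 then \<omega> else 1)"
  have "\<forall>\<gamma>\<in>E. \<phi> \<gamma> ^ p = 1" unfolding \<phi>_def \<omega>_def using cis_root_pow[OF p_pos] by auto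
  then obtain \<chi> where \<chi>: "character Gm \<chi>" "\<forall>\<gamma>\<in>E. \<chi> \<gamma> = \<phi> \<gamma>"
    using assms unfolding NPR_def by blast
  have EG: "E \<subseteq> \<Gamma>" using assms unfolding NPR_def by simp
  have "(\<Prod>\<gamma>\<in>F. \<chi> \<gamma> powi m \<gamma>) = 1" using char_rel[OF \<chi>(1)] A EG by blast
  moreover have "(\<Prod>\<gamma>\<in>F. \<chi> \<gamma> powi m \<gamma>) = \<chi> \<gamma>0 powi m \<gamma>0"
    using A g0 \<chi>(2) by (intro prod_single) (auto simp: \<phi>_def)
  ultimately have "\<omega> powi m \<gamma>0 = 1" using \<chi>(2) g0 A by (auto simp: \<phi>_def)
  thus "int p dvd m \<gamma>0" unfolding \<omega>_def by (rule cis_root_powi_dvd[OF p_pos])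
qed

lemma elem_pow_one_dvd:
  assumes "\<gamma> \<in> \<Gamma>" "\<gamma> \<noteq> (\<lambda>_. 0, \<lambda>_. 1)" "\<gamma> [^]\<^bsub>Gm\<^esub> (m::int) = \<one>\<^bsub>Gm\<^esub>"
  shows "int p dvd m"
proof -
  have e: "(\<lambda>i. of_int m * fst \<gamma> i, \<lambda>i. snd \<gamma> i powi m) = (\<lambda>_. 0, \<lambda>_. 1)"
    using assms(3) intpow[OF assms(1)] by simp
  show ?thesis
  proof (cases "\<exists>i. fst \<gamma> i \<noteq> 0")
    case True
    then obtain i where "fst \<gamma> i \<noteq> 0" by blast
    moreover have "of_int m * fst \<gamma> i = 0" using e by (metis fst_conv)
    ultimately show ?thesis by simp
  next
    case False
    hence "fst \<gamma> = (\<lambda>_. 0)" by auto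
    hence "snd \<gamma> \<noteq> (\<lambda>_. 1)" using assms(2) by (metis prod.collapse)
    then obtain i where i: "snd \<gamma> i \<noteq> 1" by auto
    have gc: "\<gamma> \<in> carrier G" using inG[OF assms(1)] .
    have "i \<in> B2" using gc i unfolding msg_carrier by blast
    hence "snd \<gamma> i \<in> Cpinf p" using gc unfolding msg_carrier by blast
    then obtain k where k: "snd \<gamma> i ^ (p ^ k) = 1" using Cpinf_pow by blast
    have "snd \<gamma> i powi m = 1" using e by (metis snd_conv)
    thus ?thesis using root_powi_dvd[OF pp k _ i] by blast
  qed
qed

lemma indep_WI: assumes "independent_set Gm E" shows "WI (E - {(\<lambda>_. 0, \<lambda>_. 1)})"
  unfolding WI_def
proof (intro conjI allI impI ballI)
  show "E - {(\<lambda>_. 0, \<lambda>_. 1)} \<subseteq> \<Gamma>" using assms unfolding independent_set_def by auto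
  fix F and m :: "_ \<Rightarrow> int" and \<gamma>0
  assume A: "finite F \<and> F \<subseteq> E - {(\<lambda>_. 0, \<lambda>_. 1)} \<and> finprod Gm (\<lambda>\<gamma>. \<gamma> [^]\<^bsub>Gm\<^esub> m \<gamma>) F = \<one>\<^bsub>Gm\<^esub>"
    and g0: "\<gamma>0 \<in> F"
  have A1: "finite F" "F \<subseteq> E" using A by auto
  have I: "\<forall>F (m :: _ \<Rightarrow> int). finite F \<and> F \<subseteq> E \<and>
        finprod Gm (\<lambda>\<gamma>. \<gamma> [^]\<^bsub>Gm\<^esub> m \<gamma>) F = \<one>\<^bsub>Gm\<^esub> \<longrightarrow>
        (\<forall>\<gamma>\<in>F. \<gamma> [^]\<^bsub>Gm\<^esub> m \<gamma> = \<one>\<^bsub>Gm\<^esub>)"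
    using assms unfolding independent_set_def by (rule conjunct2)
  have r: "\<gamma>0 [^]\<^bsub>Gm\<^esub> m \<gamma>0 = \<one>\<^bsub>Gm\<^esub>"
    using I[rule_format, of F m] A1 A g0 by blast
  have h1: "\<gamma>0 \<in> \<Gamma>" "\<gamma>0 \<noteq> (\<lambda>_. 0, \<lambda>_. 1)" using assms A g0 unfolding independent_set_def by auto
  show "int p dvd m \<gamma>0" by (rule elem_pow_one_dvd[OF h1 r])
qed

lemma rich_NPR:
  assumes "\<And>n. x n \<in> \<Gamma>"
    and R1: "\<And>a. (\<forall>n. a n ^ p = 1) \<Longrightarrow> \<exists>\<chi>. character Gm \<chi> \<and> (\<forall>n. \<chi> (x n) = a n)"
  shows "NPR Gm p (range x)"
  unfolding NPR_def
proof (intro conjI allI impI)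
  show "range x \<subseteq> carrier Gm" using assms(1) by auto
  fix \<phi> :: "_ \<Rightarrow> complex" assume "\<forall>\<gamma>\<in>range x. \<phi> \<gamma> ^ p = 1"
  then obtain \<chi> where "character Gm \<chi>" "\<forall>n. \<chi> (x n) = \<phi> (x n)" using R1[of "\<lambda>n. \<phi> (x n)"] by auto
  thus "\<exists>\<chi>. character Gm \<chi> \<and> (\<forall>\<gamma>\<in>range x. \<chi> \<gamma> = \<phi> \<gamma>)" by auto
qed

lemma rich_indep:
  assumes "\<And>n. x n \<in> \<Gamma>" "inj x"
    and R2: "\<And>n0 m. x n0 [^]\<^bsub>Gm\<^esub> (m::int) \<noteq> \<one>\<^bsub>Gm\<^esub> \<Longrightarrow>
        \<exists>\<chi>. character Gm \<chi> \<and> \<chi> (x n0) powi m \<noteq> 1 \<and> (\<forall>n. n \<noteq> n0 \<longrightarrow> \<chi> (x n) = 1)"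
  shows "independent_set Gm (range x)"
  unfolding independent_set_def
proof (intro conjI allI impI ballI)
  show "range x \<subseteq> carrier Gm" using assms(1) by auto
  fix F and m :: "_ \<Rightarrow> int" and \<gamma>0
  assume A: "finite F \<and> F \<subseteq> range x \<and> finprod Gm (\<lambda>\<gamma>. \<gamma> [^]\<^bsub>Gm\<^esub> m \<gamma>) F = \<one>\<^bsub>Gm\<^esub>"
    and g0: "\<gamma>0 \<in> F"
  obtain n0 where n0: "\<gamma>0 = x n0" using A g0 by blast
  show "\<gamma>0 [^]\<^bsub>Gm\<^esub> m \<gamma>0 = \<one>\<^bsub>Gm\<^esub>"
  proof (rule ccontr)
    assume "\<gamma>0 [^]\<^bsub>Gm\<^esub> m \<gamma>0 \<noteq> \<one>\<^bsub>Gm\<^esub>"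
    then obtain \<chi> where \<chi>: "character Gm \<chi>" "\<chi> (x n0) powi m \<gamma>0 \<noteq> 1" "\<forall>n. n \<noteq> n0 \<longrightarrow> \<chi> (x n) = 1"
      using R2[of n0 "m \<gamma>0"] n0 by auto
    have FG: "F \<subseteq> \<Gamma>" using A assms(1) by auto
    have "(\<Prod>\<gamma>\<in>F. \<chi> \<gamma> powi m \<gamma>) = 1" using char_rel[OF \<chi>(1)] A FG by blast
    moreover have "(\<Prod>\<gamma>\<in>F. \<chi> \<gamma> powi m \<gamma>) = \<chi> \<gamma>0 powi m \<gamma>0"
    proof (rule prod_single)
      show "finite F" "\<gamma>0 \<in> F" using A g0 by auto
      fix \<gamma> assume "\<gamma> \<in> F" "\<gamma> \<noteq> \<gamma>0"
      then obtain n where "\<gamma> = x n" "n \<noteq> n0" using A n0 by auto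
      thus "\<chi> \<gamma> powi m \<gamma> = 1" using \<chi>(3) by simp
    qed
    ultimately show False using \<chi>(2) n0 by simp
  qed
qed

end


lemma tri_seq:
  fixes Xs :: "'x set" and supp :: "'x \<Rightarrow> 'i set" and P :: "'x \<Rightarrow> 'i \<Rightarrow> bool"
  assumes ex: "\<And>S. finite S \<Longrightarrow> \<exists>x\<in>Xs. \<exists>i. i \<notin> S \<and> P x i"
    and fin: "\<And>x. x \<in> Xs \<Longrightarrow> finite (supp x)"
    and Psupp: "\<And>x i. P x i \<Longrightarrow> i \<in> supp x"
  obtains x :: "nat \<Rightarrow> 'x" and idx :: "nat \<Rightarrow> 'i" where "\<forall>n. x n \<in> Xs \<and> P (x n) (idx n)" "\<forall>n k. k < n \<longrightarrow> idx n \<notin> supp (x k)"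
proof -
  define sel where "sel = (\<lambda>S. SOME xi. fst xi \<in> Xs \<and> snd xi \<notin> S \<and> P (fst xi) (snd xi))"
  have selp: "fst (sel S) \<in> Xs \<and> snd (sel S) \<notin> S \<and> P (fst (sel S)) (snd (sel S))" if fS: "finite S" for S
  proof -
    obtain x i where "x \<in> Xs" "i \<notin> S" "P x i" using ex[OF fS] by blast
    hence "\<exists>xi. fst xi \<in> Xs \<and> snd xi \<notin> S \<and> P (fst xi) (snd xi)" by (intro exI[of _ "(x, i)"]) auto
    thus ?thesis unfolding sel_def by (rule someI_ex)
  qed
  define acc where "acc = rec_nat {} (\<lambda>n A. A \<union> supp (fst (sel A)))"
  have acc0: "acc 0 = {}" and accS: "\<And>n. acc (Suc n) = acc n \<union> supp (fst (sel (acc n)))"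
    unfolding acc_def by simp_all
  have accfin: "finite (acc n)" for n
  proof (induct n)
    case 0 show ?case by (simp add: acc0)
  next
    case (Suc n)
    have "fst (sel (acc n)) \<in> Xs" using selp[OF Suc] by (rule conjunct1)
    hence "finite (supp (fst (sel (acc n))))" by (rule fin)
    thus ?case using Suc by (simp add: accS)
  qed
  have accmono: "acc k \<subseteq> acc n" if "k \<le> n" for k n
    by (rule lift_Suc_mono_le[of acc, OF _ that]) (simp add: accS)
  define x where "x = (\<lambda>n. fst (sel (acc n)))"
  define idx where "idx = (\<lambda>n. snd (sel (acc n)))"
  have 1: "\<forall>n. x n \<in> Xs \<and> P (x n) (idx n)"
  proof
    fix n show "x n \<in> Xs \<and> P (x n) (idx n)" using selp[OF accfin[of n]] unfolding x_def idx_def by simp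
  qed
  have 2: "idx n \<notin> supp (x k)" if "k < n" for n k
  proof -
    have "supp (x k) \<subseteq> acc (Suc k)" unfolding x_def accS by auto
    also have "\<dots> \<subseteq> acc n" using that by (intro accmono) auto
    moreover have "idx n \<notin> acc n" using selp[OF accfin[of n]] unfolding idx_def by simp
    ultimately show ?thesis by blast
  qed
  have 3: "\<forall>n k. k < n \<longrightarrow> idx n \<notin> supp (x k)" using 2 by simp
  show ?thesis by (rule that[OF 1 3])
qed

function csol :: "(nat \<Rightarrow> real) \<Rightarrow> (nat \<Rightarrow> nat \<Rightarrow> real) \<Rightarrow> nat \<Rightarrow> real" where
  "csol \<theta> a n = (\<theta> n - (\<Sum>k<n. csol \<theta> a k * a n k)) / a n n"
  by auto
termination by (relation "measure (\<lambda>(\<theta>, a, n). n)") auto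

declare csol.simps[simp del]

lemma csol_eq: "a n n \<noteq> 0 \<Longrightarrow> (\<Sum>k\<le>n. csol \<theta> a k * a n k) = \<theta> n"
proof -
  assume "a n n \<noteq> 0"
  have "(\<Sum>k\<le>n. csol \<theta> a k * a n k) = (\<Sum>k<n. csol \<theta> a k * a n k) + csol \<theta> a n * a n n"
    by (simp add: lessThan_Suc_atMost[symmetric])
  also have "csol \<theta> a n * a n n = \<theta> n - (\<Sum>k<n. csol \<theta> a k * a n k)"
    using \<open>a n n \<noteq> 0\<close> by (subst csol.simps) simp
  finally show ?thesis by simp
qed


function esol :: "(nat \<Rightarrow> complex) \<Rightarrow> (nat \<Rightarrow> nat \<Rightarrow> complex) \<Rightarrow> nat \<Rightarrow> nat" where
  "esol a b n = (SOME e. b n n ^ e * (\<Prod>k<n. b n k ^ esol a b k) = a n)"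
  by auto
termination by (relation "measure (\<lambda>(a, b, n). n)") auto

declare esol.simps[simp del]

lemma esol_eq:
  assumes "\<exists>e. b n n ^ e * (\<Prod>k<n. b n k ^ esol a b k) = a n"
  shows "(\<Prod>k\<le>n. b n k ^ esol a b k) = a n"
proof -
  have "b n n ^ esol a b n * (\<Prod>k<n. b n k ^ esol a b k) = a n"
    using someI_ex[OF assms] by (subst esol.simps) 
  thus ?thesis by (simp add: lessThan_Suc_atMost[symmetric] mult.commute)
qed

lemma prim_root_gen:
  fixes z w :: complex
  assumes pr: "Factorial_Ring.prime p" and z: "z ^ p = 1" "z \<noteq> 1" and w: "w ^ p = 1"
  shows "\<exists>e. z ^ e = w"
proof -
  have p0: "p > 0" using pr prime_gt_0_nat by blast
  have z0: "z \<noteq> 0" using z(1) p0 by (metis power_0_left less_irrefl zero_neq_one)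
  have inj: "inj_on (\<lambda>e. z ^ e) {..<p}"
  proof (rule inj_onI, rule ccontr)
    have main: False if ab: "a < b" "b < p" "z ^ a = z ^ b" for a b
    proof -
      have "z ^ b = z ^ a * z ^ (b - a)" using ab by (metis le_add_diff_inverse less_imp_le power_add)
      hence "z ^ (b - a) = 1" using ab(3) z0 by simp
      hence "z powi int (b - a) = 1" by (simp add: power_int_of_nat)
      moreover have "z ^ (p ^ 1) = 1" using z by simp
      ultimately have "int p dvd int (b - a)" using root_powi_dvd[OF pr _ _ z(2)] by blast
      hence "p dvd (b - a)" by simp
      moreover have "0 < b - a" "b - a < p" using ab by auto
      ultimately show False by (meson nat_dvd_not_less)
    qed
    fix a b assume "a \<in> {..<p}" "b \<in> {..<p}" "z ^ a = z ^ b" "a \<noteq> b"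
    thus False using main[of a b] main[of b a] by (cases "a < b") auto
  qed
  have sub: "(\<lambda>e. z ^ e) ` {..<p} \<subseteq> {w. w ^ p = 1}"
  proof
    fix y assume "y \<in> (\<lambda>e. z ^ e) ` {..<p}"
    then obtain e where "y = z ^ e" by blast
    hence "y ^ p = (z ^ p) ^ e" by (metis power_mult mult.commute)
    thus "y \<in> {w. w ^ p = 1}" using z(1) by simp
  qed
  have "card ((\<lambda>e. z ^ e) ` {..<p}) = p" using card_image[OF inj] by simp
  also have "\<dots> = card {w::complex. w ^ p = 1}" using card_roots_unity_eq[OF p0] by simp
  finally have "(\<lambda>e. z ^ e) ` {..<p} = {w. w ^ p = 1}"
    using card_subset_eq[OF finite_roots_unity[of p] sub] p0 by simp
  hence "w \<in> (\<lambda>e. z ^ e) ` {..<p}" using w by simp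
  thus ?thesis by blast
qed

context msgctx begin

definition condA :: bool where
  "condA \<longleftrightarrow> (\<forall>S. finite S \<longrightarrow> (\<exists>x\<in>\<Gamma>. \<exists>i. i \<notin> S \<and> fst x i \<noteq> 0))"

lemma fst_fin: "x \<in> \<Gamma> \<Longrightarrow> finite {i. fst x i \<noteq> 0}"
  using inG unfolding msg_carrier by blast

lemma snd_fin: "x \<in> \<Gamma> \<Longrightarrow> finite {i. snd x i \<noteq> 1}"
  using inG unfolding msg_carrier by blast

lemma norm_root: "(z::complex) ^ p = 1 \<Longrightarrow> norm z = 1"
proof -
  assume "z ^ p = 1"
  hence "norm z ^ p = 1 ^ p" by (metis norm_one norm_power power_one)
  thus ?thesis using power_eq_imp_eq_base[of "norm z" p 1] p_pos by simp
qed

lemma condA_rich: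
  assumes condA
  shows "\<exists>E\<subseteq>\<Gamma>. infinite E \<and> NPR Gm p E \<and> independent_set Gm E"
proof -
  obtain x :: "nat \<Rightarrow> _" and idx :: "nat \<Rightarrow> 'a" where
    1: "\<forall>n. x n \<in> \<Gamma> \<and> fst (x n) (idx n) \<noteq> 0" and
    2: "\<forall>n k. k < n \<longrightarrow> idx n \<notin> {i. fst (x k) i \<noteq> 0}"
    using tri_seq[of \<Gamma> "\<lambda>x i. fst x i \<noteq> 0" "\<lambda>x. {i. fst x i \<noteq> 0}"] assms fst_fin
    unfolding condA_def by blast
  have xG: "x n \<in> \<Gamma>" for n using 1 by blast
  have injidx: "inj idx"
  proof (rule injI, rule ccontr)
    fix k n assume "idx k = idx n" "k \<noteq> n"
    thus False using 1 2 by (cases "k < n") (metis mem_Collect_eq, metis mem_Collect_eq linorder_neqE_nat)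
  qed
  have injx: "inj x"
  proof (rule injI, rule ccontr)
    fix k n assume "x k = x n" "k \<noteq> n"
    thus False using 1 2 by (cases "k < n") (metis mem_Collect_eq, metis mem_Collect_eq linorder_neqE_nat)
  qed
  define a where "a = (\<lambda>n k. real_of_rat (fst (x n) (idx k)))"
  have ann: "a n n \<noteq> 0" for n using 1 unfolding a_def by simp
  have ank: "a n k = 0" if "n < k" for n k using 2 that unfolding a_def by simp
  have RA: "\<exists>\<chi>. character Gm \<chi> \<and> (\<forall>n. \<chi> (x n) = cis (2 * pi * \<theta> n))" for \<theta>
  proof -
    define c where "c = csol \<theta> a"
    define L where "L = (\<lambda>f. \<Sum>k\<in>{k. f (idx k) \<noteq> 0}. c k * real_of_rat (f (idx k)))"
    have finK: "finite {k. f (idx k) \<noteq> 0}" if "finite {i. f i \<noteq> (0::rat)}" for f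
      using finite_vimageI[OF that injidx] by (simp add: vimage_def)
    have Lsum: "L f = (\<Sum>k\<in>K. c k * real_of_rat (f (idx k)))"
      if "finite {i. f i \<noteq> 0}" "finite K" "{k. f (idx k) \<noteq> 0} \<subseteq> K" for f K
      unfolding L_def using that finK[OF that(1)] by (intro sum.mono_neutral_left) auto
    define \<chi> where "\<chi> = (\<lambda>y :: ('a \<Rightarrow> rat) \<times> ('b \<Rightarrow> complex). cis (2 * pi * L (fst y)))"
    have ch: "character Gm \<chi>"
      unfolding character_def
    proof (intro conjI ballI)
      fix y assume "y \<in> carrier Gm" thus "cmod (\<chi> y) = 1" unfolding \<chi>_def by simp
    next
      fix y z assume y: "y \<in> carrier Gm" and z: "z \<in> carrier Gm"
      define K where "K = {k. fst y (idx k) \<noteq> 0} \<union> {k. fst z (idx k) \<noteq> 0}"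
      have fy: "finite {i. fst y i \<noteq> 0}" "finite {i. fst z i \<noteq> 0}" using y z fst_fin by auto
      have fyz: "finite {i. fst y i + fst z i \<noteq> 0}"
        by (rule finite_subset[OF _ finite_UnI[OF fy]]) auto
      have fK: "finite K" unfolding K_def using finK fy by auto
      have "L (\<lambda>i. fst y i + fst z i) = (\<Sum>k\<in>K. c k * real_of_rat (fst y (idx k) + fst z (idx k)))"
        by (rule Lsum[OF fyz fK]) (auto simp: K_def)
      also have "\<dots> = (\<Sum>k\<in>K. c k * real_of_rat (fst y (idx k))) + (\<Sum>k\<in>K. c k * real_of_rat (fst z (idx k)))"
        by (simp add: of_rat_add distrib_left sum.distrib)
      also have "\<dots> = L (fst y) + L (fst z)"
        using Lsum[OF fy(1) fK] Lsum[OF fy(2) fK] unfolding K_def by auto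
      finally show "\<chi> (y \<otimes>\<^bsub>Gm\<^esub> z) = \<chi> y * \<chi> z"
        unfolding \<chi>_def by (simp add: cis_mult distrib_left)
    qed
    have "\<chi> (x n) = cis (2 * pi * \<theta> n)" for n
    proof -
      have "L (fst (x n)) = (\<Sum>k\<le>n. c k * a n k)"
        unfolding a_def
      proof (rule Lsum)
        show "finite {i. fst (x n) i \<noteq> 0}" using fst_fin xG by blast
        show "{k. fst (x n) (idx k) \<noteq> 0} \<subseteq> {..n}"
          using ank unfolding a_def by (auto simp: not_le[symmetric])
      qed simp
      also have "\<dots> = \<theta> n" unfolding c_def by (rule csol_eq[OF ann])
      finally show ?thesis unfolding \<chi>_def by simp
    qed
    thus ?thesis using ch by blast
  qed
  have R1: "\<exists>\<chi>. character Gm \<chi> \<and> (\<forall>n. \<chi> (x n) = b n)" if b: "\<forall>n. b n ^ p = 1" for b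
  proof -
    obtain \<chi> where \<chi>: "character Gm \<chi>" "\<forall>n. \<chi> (x n) = cis (2 * pi * (Arg (b n) / (2 * pi)))"
      using RA[of "\<lambda>n. Arg (b n) / (2 * pi)"] by blast
    have "cis (2 * pi * (Arg (b n) / (2 * pi))) = b n" for n
    proof -
      have nb: "norm (b n) = 1" using norm_root b by blast
      hence "b n \<noteq> 0" by auto
      hence "cis (Arg (b n)) = sgn (b n)" by (rule cis_Arg)
      thus ?thesis using nb by (simp add: sgn_eq)
    qed
    thus ?thesis using \<chi> by auto
  qed
  have R2: "\<exists>\<chi>. character Gm \<chi> \<and> \<chi> (x n0) powi m \<noteq> 1 \<and> (\<forall>n. n \<noteq> n0 \<longrightarrow> \<chi> (x n) = 1)"
    if "x n0 [^]\<^bsub>Gm\<^esub> (m::int) \<noteq> \<one>\<^bsub>Gm\<^esub>" for n0 m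
  proof -
    have m0: "m \<noteq> 0" using that by auto
    obtain \<chi> where \<chi>: "character Gm \<chi>" "\<forall>n. \<chi> (x n) = cis (2 * pi * (if n = n0 then 1 / (2 * real_of_int m) else 0))"
      using RA[of "\<lambda>n. if n = n0 then 1 / (2 * real_of_int m) else 0"] by blast
    have "\<chi> (x n0) powi m = cis (of_int m * (2 * pi * (1 / (2 * real_of_int m))))"
      using \<chi>(2) by (simp add: cis_power_int)
    also have "of_int m * (2 * pi * (1 / (2 * real_of_int m))) = pi" using m0 by (simp add: field_simps)
    finally have "\<chi> (x n0) powi m = -1" by simp
    thus ?thesis using \<chi> by auto
  qed
  have "NPR Gm p (range x)" by (rule rich_NPR[OF xG R1]) auto
  moreover have "independent_set Gm (range x)" by (rule rich_indep[OF xG injx R2])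
  moreover have "infinite (range x)" using injx by (simp add: range_inj_infinite)
  ultimately show ?thesis using xG by blast
qed

end


context msgctx begin

definition condB :: bool where
  "condB \<longleftrightarrow> (\<forall>S. finite S \<longrightarrow> (\<exists>x\<in>\<Gamma>. fst x = (\<lambda>_. 0) \<and> (\<forall>i. snd x i ^ p = 1) \<and> (\<exists>i. i \<notin> S \<and> snd x i \<noteq> 1)))"

lemma condB_rich:
  assumes condB
  shows "\<exists>E\<subseteq>\<Gamma>. infinite E \<and> NPR Gm p E \<and> independent_set Gm E"
proof -
  let ?Xs = "{x\<in>\<Gamma>. fst x = (\<lambda>_. 0) \<and> (\<forall>i. snd x i ^ p = 1)}"
  have ex: "\<exists>x\<in>?Xs. \<exists>i. i \<notin> S \<and> snd x i \<noteq> 1" if "finite S" for S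
    using assms that unfolding condB_def by blast
  have fin': "\<And>x. x \<in> ?Xs \<Longrightarrow> finite {i. snd x i \<noteq> 1}" using snd_fin by blast
  have Ps: "\<And>x i. snd x i \<noteq> 1 \<Longrightarrow> i \<in> {i. snd x i \<noteq> 1}" by simp
  obtain x :: "nat \<Rightarrow> _" and idx :: "nat \<Rightarrow> 'b" where
    1: "\<forall>n. x n \<in> ?Xs \<and> snd (x n) (idx n) \<noteq> 1" and
    2: "\<forall>n k. k < n \<longrightarrow> idx n \<notin> {i. snd (x k) i \<noteq> 1}"
    by (rule tri_seq[of ?Xs "\<lambda>x i. snd x i \<noteq> 1" "\<lambda>x. {i. snd x i \<noteq> 1}", OF ex fin' Ps])
  have h1: "x n \<in> \<Gamma> \<and> fst (x n) = (\<lambda>_. 0) \<and> (\<forall>i. snd (x n) i ^ p = 1) \<and> snd (x n) (idx n) \<noteq> 1" for n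
    using 1 by simp
  have xG: "x n \<in> \<Gamma>" for n using h1 by simp
  have x0: "fst (x n) = (\<lambda>_. 0)" for n using h1 by simp
  have xp: "snd (x n) i ^ p = 1" for n i using conjunct1[OF conjunct2[OF conjunct2[OF h1[of n]]]] by (rule spec)
  have h2: "snd (x k) (idx n) = 1" if "k < n" for k n using 2 that by simp
  have h3: "snd (x n) (idx n) \<noteq> 1" for n using h1 by simp
  have injidx: "inj idx"
  proof (rule injI, rule ccontr)
    fix k n assume a: "idx k = idx n" "k \<noteq> n"
    show False
    proof (cases "k < n")
      case True thus False using h2[OF True] h3[of k] a by simp
    next
      case False hence "n < k" using a by simp
      thus False using h2[of n k] h3[of n] a by simp
    qed
  qed
  have injx: "inj x"
  proof (rule injI, rule ccontr)
    fix k n assume a: "x k = x n" "k \<noteq> n"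
    show False
    proof (cases "k < n")
      case True thus False using h2[OF True] h3[of n] a by simp
    next
      case False hence "n < k" using a by simp
      thus False using h2[of n k] h3[of k] a by simp
    qed
  qed
  define b where "b = (\<lambda>n k. snd (x n) (idx k))"
  have bnn: "b n n \<noteq> 1" for n using h1 unfolding b_def by simp
  have bnk: "b n k = 1" if "n < k" for n k using 2 that unfolding b_def by simp
  have bp: "b n k ^ p = 1" for n k unfolding b_def by (rule xp)
  have R1: "\<exists>\<chi>. character Gm \<chi> \<and> (\<forall>n. \<chi> (x n) = t n)" if t: "\<forall>n. t n ^ p = 1" for t
  proof -
    define e where "e = esol t b"
    define \<chi> where "\<chi> = (\<lambda>y :: ('a \<Rightarrow> rat) \<times> ('b \<Rightarrow> complex).
        \<Prod>k\<in>{k. snd y (idx k) \<noteq> 1}. snd y (idx k) ^ e k)"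
    have finK: "finite {k. f (idx k) \<noteq> 1}" if "finite {i. f i \<noteq> (1::complex)}" for f
      using finite_vimageI[OF that injidx] by (simp add: vimage_def)
    have Psum: "\<chi> y = (\<Prod>k\<in>K. snd y (idx k) ^ e k)"
      if "finite {i. snd y i \<noteq> 1}" "finite K" "{k. snd y (idx k) \<noteq> 1} \<subseteq> K" for y K
      unfolding \<chi>_def using that finK[OF that(1)] by (intro prod.mono_neutral_left) auto
    have ch: "character Gm \<chi>"
      unfolding character_def
    proof (intro conjI ballI)
      fix y assume y: "y \<in> carrier Gm"
      have "cmod (\<chi> y) = (\<Prod>k\<in>{k. snd y (idx k) \<noteq> 1}. cmod (snd y (idx k)) ^ e k)"
        unfolding \<chi>_def by (simp add: prod_norm[symmetric] norm_power)
      also have "\<dots> = 1" using msg_snd_norm[OF p_pos inG] y by simp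
      finally show "cmod (\<chi> y) = 1" .
    next
      fix y z assume y: "y \<in> carrier Gm" and z: "z \<in> carrier Gm"
      define K where "K = {k. snd y (idx k) \<noteq> 1} \<union> {k. snd z (idx k) \<noteq> 1}"
      have fy: "finite {i. snd y i \<noteq> 1}" "finite {i. snd z i \<noteq> 1}" using y z snd_fin by auto
      have fyz: "finite {i. snd y i * snd z i \<noteq> 1}"
        by (rule finite_subset[OF _ finite_UnI[OF fy]]) auto
      have fK: "finite K" unfolding K_def using finK fy by auto
      have "\<chi> (\<lambda>i. fst y i + fst z i, \<lambda>i. snd y i * snd z i) =
          (\<Prod>k\<in>K. snd (\<lambda>i. fst y i + fst z i, \<lambda>i. snd y i * snd z i) (idx k) ^ e k)"
        by (rule Psum) (use fyz fK in \<open>auto simp: K_def\<close>)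
      hence "\<chi> (y \<otimes>\<^bsub>Gm\<^esub> z) = (\<Prod>k\<in>K. (snd y (idx k) * snd z (idx k)) ^ e k)"
        by simp
      also have "\<dots> = (\<Prod>k\<in>K. snd y (idx k) ^ e k) * (\<Prod>k\<in>K. snd z (idx k) ^ e k)"
        by (simp add: power_mult_distrib prod.distrib)
      also have "\<dots> = \<chi> y * \<chi> z"
        using Psum[OF fy(1) fK] Psum[OF fy(2) fK] unfolding K_def by auto
      finally show "\<chi> (y \<otimes>\<^bsub>Gm\<^esub> z) = \<chi> y * \<chi> z" .
    qed
    have "\<chi> (x n) = t n" for n
    proof -
      have "\<chi> (x n) = (\<Prod>k\<le>n. b n k ^ e k)"
        unfolding b_def
      proof (rule Psum)
        show "finite {i. snd (x n) i \<noteq> 1}" using snd_fin xG by blast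
        show "{k. snd (x n) (idx k) \<noteq> 1} \<subseteq> {..n}"
          using bnk unfolding b_def by (auto simp: not_le[symmetric])
      qed simp
      also have "\<dots> = t n" unfolding e_def
      proof (rule esol_eq)
        define P where "P = (\<Prod>k<n. b n k ^ esol t b k)"
        have "P ^ p = (\<Prod>k<n. (b n k ^ esol t b k) ^ p)"
          unfolding P_def by (rule prod_power_distrib)
        also have "\<dots> = (\<Prod>k<n. (b n k ^ p) ^ esol t b k)"
          by (intro prod.cong refl) (metis power_mult mult.commute)
        finally have "P ^ p = (\<Prod>k<n. (b n k ^ p) ^ esol t b k)" .
        hence Pp: "P ^ p = 1" using bp by simp
        hence P0: "P \<noteq> 0" using p_pos by (metis power_0_left less_irrefl zero_neq_one)
        have "(t n / P) ^ p = 1" using Pp t by (simp add: power_divide)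
        then obtain e' where "b n n ^ e' = t n / P" using prim_root_gen[OF pp bp bnn] by blast
        hence "b n n ^ e' * P = t n" using P0 by simp
        thus "\<exists>e. b n n ^ e * (\<Prod>k<n. b n k ^ esol t b k) = t n" unfolding P_def by blast
      qed
      finally show ?thesis .
    qed
    thus ?thesis using ch by blast
  qed
  have R2: "\<exists>\<chi>. character Gm \<chi> \<and> \<chi> (x n0) powi m \<noteq> 1 \<and> (\<forall>n. n \<noteq> n0 \<longrightarrow> \<chi> (x n) = 1)"
    if ne: "x n0 [^]\<^bsub>Gm\<^esub> (m::int) \<noteq> \<one>\<^bsub>Gm\<^esub>" for n0 m
  proof -
    have nd: "\<not> int p dvd m"
    proof
      assume "int p dvd m"
      then obtain j where j: "m = int p * j" by blast
      have "snd (x n0) i powi m = 1" for i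
        unfolding j power_int_mult using xp[of n0 i] by (simp add: power_int_of_nat)
      hence "x n0 [^]\<^bsub>Gm\<^esub> m = \<one>\<^bsub>Gm\<^esub>" using intpow[OF xG] x0 by simp
      thus False using ne by simp
    qed
    define \<omega> where "\<omega> = cis (2 * pi / real p)"
    have \<omega>p: "\<omega> ^ p = 1" unfolding \<omega>_def by (rule cis_root_pow[OF p_pos])
    obtain \<chi> where \<chi>: "character Gm \<chi>" "\<forall>n. \<chi> (x n) = (if n = n0 then \<omega> else 1)"
    proof -
      have "\<forall>n. (if n = n0 then \<omega> else 1) ^ p = 1" using \<omega>p by simp
      thus ?thesis using R1[of "\<lambda>n. if n = n0 then \<omega> else 1"] that by blast
    qed
    have "\<chi> (x n0) powi m \<noteq> 1" using \<chi>(2) nd cis_root_powi_dvd[OF p_pos] unfolding \<omega>_def by auto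
    thus ?thesis using \<chi> by auto
  qed
  have "NPR Gm p (range x)" by (rule rich_NPR[OF xG R1]) auto
  moreover have "independent_set Gm (range x)" by (rule rich_indep[OF xG injx R2])
  moreover have "infinite (range x)" using injx by (simp add: range_inj_infinite)
  ultimately show ?thesis using xG by blast
qed

end


lemma dep_rat:
  fixes v :: "'j \<Rightarrow> 'a \<Rightarrow> rat"
  assumes "finite S"
  shows "finite J \<Longrightarrow> card S < card J \<Longrightarrow> (\<forall>j\<in>J. \<forall>i. i \<notin> S \<longrightarrow> v j i = 0) \<Longrightarrow>
    \<exists>q. (\<exists>j\<in>J. q j \<noteq> 0) \<and> (\<forall>i. (\<Sum>j\<in>J. q j * v j i) = 0)"
  using assms
proof (induct S arbitrary: J v rule: finite_induct)
  case empty
  have "J \<noteq> {}" using empty.prems(2) by auto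
  then obtain j0 where j0: "j0 \<in> J" by blast
  show ?case
    by (rule exI[of _ "\<lambda>j. 1"]) (use empty j0 in auto)
next
  case (insert s S)
  show ?case
  proof (cases "\<forall>j\<in>J. v j s = 0")
    case True
    have "\<forall>j\<in>J. \<forall>i. i \<notin> S \<longrightarrow> v j i = 0" using True insert.prems(3) by (metis insertE)
    moreover have "card S < card J" using insert by simp
    ultimately show ?thesis using insert.hyps(3)[OF insert.prems(1)] by blast
  next
    case False
    then obtain j0 where j0: "j0 \<in> J" "v j0 s \<noteq> 0" by blast
    define J' where "J' = J - {j0}"
    define w where "w = (\<lambda>j i. v j i - (v j s / v j0 s) * v j0 i)"
    have fJ': "finite J'" using insert.prems(1) unfolding J'_def by simp
    have cJ': "card S < card J'" using insert j0 unfolding J'_def by (simp add: card_Diff_singleton)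
    have wS: "\<forall>j\<in>J'. \<forall>i. i \<notin> S \<longrightarrow> w j i = 0"
    proof (intro ballI allI impI)
      fix j i assume j: "j \<in> J'" and i: "i \<notin> S"
      show "w j i = 0"
      proof (cases "i = s")
        case True thus ?thesis unfolding w_def using j0 by simp
      next
        case False
        hence "v j i = 0" "v j0 i = 0" using insert.prems(3) i j j0 unfolding J'_def by auto
        thus ?thesis unfolding w_def by simp
      qed
    qed
    obtain q' where q': "\<exists>j\<in>J'. q' j \<noteq> 0" "\<forall>i. (\<Sum>j\<in>J'. q' j * w j i) = 0"
      using insert.hyps(3)[OF fJ' cJ' wS] by blast
    define c where "c = (\<Sum>j\<in>J'. q' j * v j s) / v j0 s"
    define q where "q = (\<lambda>j. if j = j0 then - c else q' j)"
    have "(\<Sum>j\<in>J. q j * v j i) = 0" for i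
    proof -
      have "(\<Sum>j\<in>J. q j * v j i) = q j0 * v j0 i + (\<Sum>j\<in>J'. q j * v j i)"
        unfolding J'_def using insert.prems(1) j0(1) by (simp add: sum.remove)
      also have "(\<Sum>j\<in>J'. q j * v j i) = (\<Sum>j\<in>J'. q' j * v j i)"
        unfolding q_def J'_def by (intro sum.cong) auto
      also have "(\<Sum>j\<in>J'. q' j * w j i) = (\<Sum>j\<in>J'. q' j * v j i) - c * v j0 i"
        unfolding w_def c_def by (simp add: algebra_simps sum_subtractf sum_distrib_left sum_distrib_right sum_divide_distrib)
      hence "(\<Sum>j\<in>J'. q' j * v j i) = c * v j0 i" using q'(2) by simp
      finally show ?thesis unfolding q_def by simp
    qed
    moreover have "\<exists>j\<in>J. q j \<noteq> 0" using q'(1) unfolding q_def J'_def by auto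
    ultimately show ?thesis by blast
  qed
qed

lemma rat_clear:
  fixes q :: "'j \<Rightarrow> rat"
  assumes "finite J"
  shows "\<exists>D::int. D > 0 \<and> (\<forall>j\<in>J. of_int D * q j \<in> \<int>)"
  using assms
proof (induct J rule: finite_induct)
  case empty then show ?case by (intro exI[of _ 1]) simp
next
  case (insert j J)
  then obtain D where D: "D > 0" "\<forall>k\<in>J. of_int D * q k \<in> \<int>" by blast
  obtain a b where ab: "quotient_of (q j) = (a, b)" by (cases "quotient_of (q j)") auto
  have b0: "b > 0" using quotient_of_denom_pos[OF ab] .
  have qj: "q j = of_int a / of_int b" using quotient_of_div[OF ab] .
  have "of_int (D * b) * q j \<in> \<int>" using b0 qj by simp
  moreover have "of_int (D * b) * q k \<in> \<int>" if "k \<in> J" for k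
  proof -
    have "of_int (D * b) * q k = of_int b * (of_int D * q k)" by simp
    thus ?thesis using D(2) that by (metis Ints_mult Ints_of_int)
  qed
  ultimately show ?case using D b0 by (intro exI[of _ "D * b"]) auto
qed

lemma dep_int:
  fixes v :: "'j \<Rightarrow> 'a \<Rightarrow> rat"
  assumes "finite S" "finite J" "card S < card J" "\<forall>j\<in>J. \<forall>i. i \<notin> S \<longrightarrow> v j i = 0"
  shows "\<exists>m::'j \<Rightarrow> int. (\<exists>j\<in>J. m j \<noteq> 0) \<and> (\<forall>i. (\<Sum>j\<in>J. of_int (m j) * v j i) = 0)"
proof -
  obtain q where q: "\<exists>j\<in>J. q j \<noteq> 0" "\<forall>i. (\<Sum>j\<in>J. q j * v j i) = 0"
    using dep_rat[OF assms(1) assms(2-4)] by blast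
  obtain D where D: "D > 0" "\<forall>j\<in>J. of_int D * q j \<in> \<int>" using rat_clear[OF assms(2)] by blast
  define m where "m = (\<lambda>j. SOME n::int. of_int D * q j = of_int n)"
  have m: "of_int (m j) = of_int D * q j" if "j \<in> J" for j
  proof -
    have "\<exists>n::int. of_int D * q j = of_int n" using D(2) that by (metis Ints_cases)
    thus ?thesis unfolding m_def by (metis (mono_tags, lifting) someI_ex)
  qed
  have "\<exists>j\<in>J. m j \<noteq> 0" using q(1) m D(1) by (metis mult_eq_0_iff of_int_0 of_int_eq_0_iff less_irrefl)
  moreover have "(\<Sum>j\<in>J. of_int (m j) * v j i) = 0" for i
  proof -
    have "(\<Sum>j\<in>J. of_int (m j) * v j i) = (\<Sum>j\<in>J. of_int D * (q j * v j i))"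
      using m by (intro sum.cong) auto
    also have "\<dots> = of_int D * (\<Sum>j\<in>J. q j * v j i)" by (simp add: sum_distrib_left)
    finally show ?thesis using q(2) by simp
  qed
  ultimately show ?thesis by blast
qed

lemma dep_int_p:
  fixes v :: "'j \<Rightarrow> 'a \<Rightarrow> rat" and p :: nat
  assumes "p > 1" "finite J"
  shows "(\<exists>j\<in>J. m j \<noteq> 0) \<Longrightarrow> (\<forall>i. (\<Sum>j\<in>J. of_int (m j) * v j i) = 0) \<Longrightarrow>
    \<exists>m'::'j \<Rightarrow> int. (\<exists>j\<in>J. \<not> int p dvd m' j) \<and> (\<forall>i. (\<Sum>j\<in>J. of_int (m' j) * v j i) = 0)"
proof (induct "\<Sum>j\<in>J. nat \<bar>m j\<bar>" arbitrary: m rule: less_induct)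
  case (less m)
  show ?case
  proof (cases "\<forall>j\<in>J. int p dvd m j")
    case False thus ?thesis using less.prems(2) by blast
  next
    case True
    define k where "k = (\<lambda>j. m j div int p)"
    have mk: "m j = int p * k j" if "j \<in> J" for j using True that unfolding k_def by simp
    have "(\<Sum>j\<in>J. of_int (k j) * v j i) = 0" for i
    proof -
      have "of_int (int p) * (\<Sum>j\<in>J. of_int (k j) * v j i) = (\<Sum>j\<in>J. of_int (m j) * v j i)"
        by (simp add: sum_distrib_left mk mult.assoc)
      thus ?thesis using less.prems(2) assms(1) by simp
    qed
    moreover have k0: "\<exists>j\<in>J. k j \<noteq> 0" using less.prems(1) mk by force
    moreover have "(\<Sum>j\<in>J. nat \<bar>k j\<bar>) < (\<Sum>j\<in>J. nat \<bar>m j\<bar>)"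
    proof (rule sum_strict_mono_ex1[OF assms(2)])
      show "\<forall>j\<in>J. nat \<bar>k j\<bar> \<le> nat \<bar>m j\<bar>"
      proof
        fix j assume j: "j \<in> J"
        have "\<bar>m j\<bar> = int p * \<bar>k j\<bar>" using mk[OF j] by (simp add: abs_mult)
        thus "nat \<bar>k j\<bar> \<le> nat \<bar>m j\<bar>" using assms(1) by (simp add: mult_le_cancel_right1 nat_mono)
      qed
      obtain j where j: "j \<in> J" "k j \<noteq> 0" using k0 by blast
      have "\<bar>m j\<bar> = int p * \<bar>k j\<bar>" using mk[OF j(1)] by (simp add: abs_mult)
      hence "nat \<bar>k j\<bar> < nat \<bar>m j\<bar>" using assms(1) j(2) by simp
      thus "\<exists>j\<in>J. nat \<bar>k j\<bar> < nat \<bar>m j\<bar>" using j by blast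
    qed
    ultimately show ?thesis using less.hyps by blast
  qed
qed


lemma count_lemma:
  fixes h :: "nat \<Rightarrow> 'b \<Rightarrow> complex" and p N K :: nat and S2 :: "'b set"
  assumes p: "p > 1" and K: "K \<ge> 1" and S2: "finite S2"
    and H1: "\<And>b i. b < N \<Longrightarrow> h b i ^ (p ^ K) = 1"
    and H2: "\<And>c. (\<forall>i. (\<Prod>b<N. h b i ^ c b) = 1) \<Longrightarrow> \<forall>b<N. p dvd c b"
    and H3: "\<And>c. (\<forall>i. (\<Prod>b<N. h b i ^ c b) ^ p = 1) \<Longrightarrow> \<forall>i. i \<notin> S2 \<longrightarrow> (\<Prod>b<N. h b i ^ c b) = 1"
  shows "N \<le> card S2"
proof -
  define Q where "Q = p ^ K"
  have Q1: "Q > 1" unfolding Q_def using p K by (metis One_nat_def Suc_le_eq one_less_power)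
  define pf where "pf = (\<lambda>c::nat \<Rightarrow> nat. \<lambda>i. \<Prod>b<N. h b i ^ c b)"
  have hQ: "h b i ^ (Q * n) = 1" if "b < N" for b i n
    using H1[OF that] unfolding Q_def by (simp add: power_mult)
  have h0: "h b i \<noteq> 0" if "b < N" for b i
    using H1[OF that] Q1 unfolding Q_def by (metis power_0_left zero_neq_one gr_implies_not0 Q_def)
  have pf_mult: "pf c i * pf c' i = pf (\<lambda>b. c b + c' b) i" for c c' i
    unfolding pf_def by (simp add: power_add prod.distrib)
  have pf_pow: "pf c i ^ n = pf (\<lambda>b. n * c b) i" for c i n
  proof -
    have "pf c i ^ n = (\<Prod>b<N. (h b i ^ c b) ^ n)" unfolding pf_def by (rule prod_power_distrib)
    also have "\<dots> = pf (\<lambda>b. n * c b) i" unfolding pf_def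
      by (intro prod.cong refl) (metis power_mult mult.commute)
    finally show ?thesis .
  qed
  have pf_Q: "pf (\<lambda>b. Q * c b) i = 1" for c i
    unfolding pf_def by (intro prod.neutral) (simp add: hQ)
  have pf_nz: "pf c i \<noteq> 0" for c i
    unfolding pf_def using h0 by simp
  have pf_cong: "pf c = pf c'" if "\<And>b. b < N \<Longrightarrow> c b = c' b" for c c'
    unfolding pf_def using that by (intro ext prod.cong) auto
  have pf_mod: "pf c = pf (\<lambda>b. c b mod Q)" for c
  proof -
    have "h b i ^ c b = h b i ^ (c b mod Q)" if "b < N" for b i
    proof -
      have "h b i ^ c b = h b i ^ (Q * (c b div Q)) * h b i ^ (c b mod Q)"
        by (simp add: power_add[symmetric])
      thus ?thesis using hQ[OF that] by simp
    qed
    thus ?thesis unfolding pf_def by (intro ext prod.cong) auto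
  qed
  have QS: "x + (Q - 1) * x = Q * x" for x
  proof -
    have "Q = Suc (Q - 1)" using Q1 by simp
    hence "Q * x = x + (Q - 1) * x" by (metis mult_Suc)
    thus ?thesis by simp
  qed
  define Hset where "Hset = range pf"
  define PQ where "PQ = (\<Pi>\<^sub>E b\<in>{..<N}. {..<Q})"
  have finH: "finite Hset"
  proof -
    have "Hset \<subseteq> pf ` PQ"
    proof
      fix g assume "g \<in> Hset"
      then obtain c where c: "g = pf c" unfolding Hset_def by blast
      define c' where "c' = restrict (\<lambda>b. c b mod Q) {..<N}"
      have "c' \<in> PQ" unfolding c'_def PQ_def using Q1 by auto
      have "\<And>b. b < N \<Longrightarrow> c' b = c b mod Q" unfolding c'_def by simp
      hence "pf c' = pf (\<lambda>b. c b mod Q)" by (rule pf_cong)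
      moreover have "\<dots> = pf c" by (rule pf_mod[symmetric])
      ultimately have e: "pf c' = pf c" by (rule trans)
      show "g \<in> pf ` PQ" unfolding c by (rule image_eqI[where f=pf and x=c', OF e[symmetric] \<open>c' \<in> PQ\<close>])
    qed
    moreover have "finite PQ" unfolding PQ_def by (intro finite_PiE) auto
    ultimately show ?thesis by (meson finite_imageI finite_subset)
  qed
  define P where "P = (\<lambda>g i. g i ^ p) ` Hset"
  define Hp where "Hp = {g\<in>Hset. \<forall>i. g i ^ p = 1}"
  define A where "A = (\<Pi>\<^sub>E b\<in>{..<N}. {..<p})"
  have finP: "finite P" unfolding P_def using finH by simp
  have finA: "finite A" unfolding A_def by (intro finite_PiE) auto
  have PH: "(\<lambda>i. pf c i ^ p) = pf (\<lambda>b. p * c b)" for c using pf_pow by auto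
  define \<Phi> where "\<Phi> = (\<lambda>(a, q). \<lambda>i. pf a i * q i)"
  have inj: "inj_on \<Phi> (A \<times> P)"
  proof (rule inj_onI, clarify)
    fix a q a' q'
    assume a: "a \<in> A" and q: "q \<in> P" and a': "a' \<in> A" and q': "q' \<in> P" and eq: "\<Phi> (a, q) = \<Phi> (a', q')"
    obtain c where c: "q = pf (\<lambda>b. p * c b)" using q PH unfolding P_def Hset_def by auto
    obtain c' where c': "q' = pf (\<lambda>b. p * c' b)" using q' PH unfolding P_def Hset_def by auto
    define e where "e = (\<lambda>b. a b + p * c b + (Q - 1) * (a' b + p * c' b))"
    have "pf e i = 1" for i
    proof -
      have "pf e i = (pf a i * q i) * pf (\<lambda>b. (Q - 1) * (a' b + p * c' b)) i"
        unfolding e_def c by (simp add: pf_mult add.assoc)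
      also have "pf a i * q i = pf a' i * q' i" using eq unfolding \<Phi>_def by (metis case_prod_conv)
      also have "pf a' i * q' i = pf (\<lambda>b. a' b + p * c' b) i" unfolding c' by (rule pf_mult)
      also have "pf (\<lambda>b. a' b + p * c' b) i * pf (\<lambda>b. (Q - 1) * (a' b + p * c' b)) i = pf (\<lambda>b. Q * (a' b + p * c' b)) i"
        by (simp only: pf_mult QS)
      finally show ?thesis using pf_Q by simp
    qed
    hence dv: "\<forall>b<N. p dvd e b" using H2 unfolding pf_def by blast
    have aeq: "a b = a' b" if "b < N" for b
    proof -
      define XX where "XX = int (c b) - int (c' b) + int (p ^ (K - 1)) * (int (a' b) + int p * int (c' b))"
      have eeq: "int (e b) = (int (a b) - int (a' b)) + int p * XX"
      proof -
        have QQ: "Q = p * p ^ (K - 1)" unfolding Q_def using K by (metis Suc_diff_1 less_le_trans zero_less_one power_Suc)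
        have "int (e b) = int (a b) + int p * int (c b) + (int Q - 1) * (int (a' b) + int p * int (c' b))"
          unfolding e_def using Q1 by (simp add: of_nat_diff)
        thus ?thesis unfolding QQ XX_def by (simp add: algebra_simps)
      qed
      moreover have "int p dvd int (e b)" using dv that by simp
      hence "int p dvd (int (e b) - int p * XX)" by (intro dvd_diff) auto
      moreover have "int (e b) - int p * XX = int (a b) - int (a' b)" using eeq by simp
      ultimately have "int p dvd (int (a b) - int (a' b))" by simp
      moreover have "a b < p" "a' b < p" using a a' that unfolding A_def by auto
      ultimately show ?thesis
      proof -
        assume dvd: "int p dvd (int (a b) - int (a' b))" and lt: "a b < p" "a' b < p"
        show ?thesis
        proof (rule ccontr)
          assume "a b \<noteq> a' b"
          hence "int (a b) - int (a' b) \<noteq> 0" by simp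
          hence "\<bar>int p\<bar> \<le> \<bar>int (a b) - int (a' b)\<bar>" using dvd by (rule dvd_imp_le_int)
          thus False using lt by linarith
        qed
      qed
    qed
    have "a = a'" using PiE_ext[of a "{..<N}" "\<lambda>_. {..<p}" a'] a a' aeq unfolding A_def by auto
    moreover have "q = q'"
    proof
      fix i
      have "pf a i * q i = pf a' i * q' i" using eq unfolding \<Phi>_def by (metis case_prod_conv)
      thus "q i = q' i" using \<open>a = a'\<close> pf_nz by simp
    qed
    ultimately show "a = a' \<and> q = q'" by simp
  qed
  have img: "\<Phi> ` (A \<times> P) \<subseteq> Hset"
  proof clarify
    fix a q assume "a \<in> A" "q \<in> P"
    then obtain c where c: "q = pf (\<lambda>b. p * c b)" using PH unfolding P_def Hset_def by auto
    have "\<Phi> (a, q) = pf (\<lambda>b. a b + p * c b)" unfolding \<Phi>_def c by (simp add: pf_mult)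
    thus "\<Phi> (a, q) \<in> Hset" unfolding Hset_def by simp
  qed
  have c1: "card A * card P \<le> card Hset"
    using card_inj_on_le[OF inj img finH] by (simp add: card_cartesian_product)
  have fib: "card {g\<in>Hset. (\<lambda>i. g i ^ p) = q} \<le> card Hp" if q: "q \<in> P" for q
  proof -
    obtain c0 where c0: "q = (\<lambda>i. pf c0 i ^ p)" using q unfolding P_def Hset_def by auto
    define u where "u = pf (\<lambda>b. (Q - 1) * c0 b)"
    have u1: "pf c0 i * u i = 1" for i
    proof -
      have "pf c0 i * u i = pf (\<lambda>b. Q * c0 b) i" unfolding u_def by (simp only: pf_mult QS)
      thus ?thesis using pf_Q by simp
    qed
    have "inj_on (\<lambda>g i. g i * u i) {g\<in>Hset. (\<lambda>i. g i ^ p) = q}"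
    proof (rule inj_onI, rule ext)
      fix g g' i assume "(\<lambda>i. g i * u i) = (\<lambda>i. g' i * u i)"
      hence "g i * u i = g' i * u i" by metis
      moreover have "u i \<noteq> 0" unfolding u_def using pf_nz by simp
      ultimately show "g i = g' i" by simp
    qed
    moreover have "(\<lambda>g i. g i * u i) ` {g\<in>Hset. (\<lambda>i. g i ^ p) = q} \<subseteq> Hp"
    proof clarify
      fix g assume g: "g \<in> Hset" "q = (\<lambda>i. g i ^ p)"
      obtain c where c: "g = pf c" using g(1) unfolding Hset_def by blast
      have "(\<lambda>i. g i * u i) = pf (\<lambda>b. c b + (Q - 1) * c0 b)" unfolding c u_def pf_mult by simp
      hence "(\<lambda>i. g i * u i) \<in> Hset" unfolding Hset_def by simp
      moreover have "(g i * u i) ^ p = 1" for i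
      proof -
        have "(g i * u i) ^ p = g i ^ p * u i ^ p" by (simp add: power_mult_distrib)
        also have "g i ^ p = pf c0 i ^ p" using g(2) c0 by metis
        also have "pf c0 i ^ p * u i ^ p = (pf c0 i * u i) ^ p" by (simp add: power_mult_distrib)
        finally show ?thesis using u1 by simp
      qed
      ultimately show "(\<lambda>i. g i * u i) \<in> Hp" unfolding Hp_def by simp
    qed
    moreover have "finite Hp" unfolding Hp_def using finH by simp
    ultimately show ?thesis by (rule card_inj_on_le)
  qed
  have U: "Hset = (\<Union>q\<in>P. {g\<in>Hset. (\<lambda>i. g i ^ p) = q})" unfolding P_def by auto
  have "card Hset = card (\<Union>q\<in>P. {g\<in>Hset. (\<lambda>i. g i ^ p) = q})" using U by (rule arg_cong)
  also have "\<dots> \<le> (\<Sum>q\<in>P. card {g\<in>Hset. (\<lambda>i. g i ^ p) = q})"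
    by (rule card_UN_le[OF finP])
  also have "\<dots> \<le> card P * card Hp" using sum_bounded_above[of P _ "card Hp"] fib by simp
  finally have c2: "card Hset \<le> card P * card Hp" .
  have "P \<noteq> {}" unfolding P_def Hset_def by simp
  hence "card P > 0" using finP by (simp add: card_gt_0_iff)
  hence cA: "card A \<le> card Hp" using c1 c2 by (metis le_trans mult.commute mult_le_cancel2)
  have cardA: "card A = p ^ N" unfolding A_def by (simp add: card_PiE)
  define R where "R = {g. (\<forall>i. g i ^ p = (1::complex)) \<and> (\<forall>i. i \<notin> S2 \<longrightarrow> g i = 1)}"
  define ext2 where "ext2 = (\<lambda>\<phi>::'b \<Rightarrow> complex. \<lambda>i. if i \<in> S2 then \<phi> i else 1)"
  define RT where "RT = (\<Pi>\<^sub>E i\<in>S2. {z::complex. z ^ p = 1})"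
  have HpR: "Hp \<subseteq> R"
  proof
    fix g assume g: "g \<in> Hp"
    then obtain c where c: "g = pf c" unfolding Hp_def Hset_def by blast
    have "\<forall>i. pf c i ^ p = 1" using g c unfolding Hp_def by simp
    hence "\<forall>i. i \<notin> S2 \<longrightarrow> pf c i = 1" using H3[of c] unfolding pf_def by simp
    thus "g \<in> R" using g c unfolding R_def Hp_def by simp
  qed
  have RRT: "R \<subseteq> ext2 ` RT"
  proof
    fix g assume g: "g \<in> R"
    have "restrict g S2 \<in> RT" using g unfolding R_def RT_def by auto
    moreover have "g = ext2 (restrict g S2)" using g unfolding R_def ext2_def by auto
    ultimately show "g \<in> ext2 ` RT" by blast
  qed
  have p0: "p > 0" using p by simp
  have finRT: "finite RT" unfolding RT_def using S2 finite_roots_unity[of p] p0 by (intro finite_PiE) auto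
  have "card RT = p ^ card S2" unfolding RT_def using S2 card_roots_unity_eq[OF p0] by (simp add: card_PiE)
  moreover have "card Hp \<le> card R" using HpR RRT finRT by (meson card_mono finite_imageI finite_subset)
  moreover have "card R \<le> card RT" using RRT finRT by (meson card_image_le card_mono finite_imageI le_trans)
  ultimately have "p ^ N \<le> p ^ card S2" using cA cardA by linarith
  thus ?thesis using power_le_imp_le_exp[OF p] by blast
qed


lemma common_bound:
  assumes "finite T" "\<forall>i\<in>T. \<exists>k::nat. P i k" "\<And>i k k'. P i k \<Longrightarrow> k \<le> k' \<Longrightarrow> P i k'"
  shows "\<exists>K. \<forall>i\<in>T. P i K"
  using assms(1,2)
proof (induct T rule: finite_induct)
  case empty then show ?case by simp
next
  case (insert a T)
  then obtain K where K: "\<forall>i\<in>T. P i K" by blast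
  obtain k where k: "P a k" using insert.prems by blast
  have "\<forall>i\<in>insert a T. P i (max K k)" using K k assms(3) by (metis insertE max.cobounded1 max.cobounded2)
  thus ?case by blast
qed

lemma pow_pp_mono: "(z::complex) ^ (p ^ k) = 1 \<Longrightarrow> k \<le> K \<Longrightarrow> z ^ (p ^ K) = 1"
proof -
  assume z: "z ^ (p ^ k) = 1" and k: "k \<le> K"
  have "p ^ K = p ^ k * p ^ (K - k)" using k by (simp add: power_add[symmetric])
  hence "z ^ (p ^ K) = (z ^ (p ^ k)) ^ (p ^ (K - k))" by (simp add: power_mult)
  thus ?thesis using z by simp
qed

lemma powi_pow_comm: "((z::complex) powi m) ^ n = (z ^ n) powi m"
proof -
  have "(z powi m) ^ n = (z powi m) powi int n" by (simp add: power_int_of_nat)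
  also have "\<dots> = z powi (m * int n)" by (simp add: power_int_mult)
  also have "\<dots> = z powi (int n * m)" by (simp add: mult.commute)
  also have "\<dots> = (z powi int n) powi m" by (simp add: power_int_mult)
  finally show ?thesis by (simp add: power_int_of_nat)
qed

context msgctx begin

lemma tors_elem: assumes "x \<in> \<Gamma>" shows "\<exists>K. \<forall>i. snd x i ^ (p ^ K) = 1"
proof -
  have xc: "x \<in> carrier G" using inG[OF assms] .
  have "\<forall>i\<in>{i. snd x i \<noteq> 1}. \<exists>k. snd x i ^ (p ^ k) = 1"
  proof
    fix i assume "i \<in> {i. snd x i \<noteq> 1}"
    hence "i \<in> B2" using xc unfolding msg_carrier by blast
    hence "snd x i \<in> Cpinf p" using xc unfolding msg_carrier by blast
    thus "\<exists>k. snd x i ^ (p ^ k) = 1" using Cpinf_pow by blast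
  qed
  then obtain K where K: "\<forall>i\<in>{i. snd x i \<noteq> 1}. snd x i ^ (p ^ K) = 1"
    using common_bound[OF snd_fin[OF assms], of "\<lambda>i k. snd x i ^ (p ^ k) = 1"] pow_pp_mono by blast
  have "snd x i ^ (p ^ K) = 1" for i using K by (cases "snd x i = 1") auto
  thus ?thesis by blast
qed

lemma idx_closed:
  assumes "finite J" "inj_on y J" "y ` J \<subseteq> \<Gamma>"
  shows "(\<lambda>i. \<Sum>j\<in>J. of_int (\<mu> j) * fst (y j) i, \<lambda>i. \<Prod>j\<in>J. snd (y j) i powi \<mu> j) \<in> \<Gamma>"
proof -
  define m where "m = (\<lambda>\<gamma>. \<mu> (the_inv_into J y \<gamma>))"
  have my: "m (y j) = \<mu> j" if "j \<in> J" for j unfolding m_def using the_inv_into_f_f[OF assms(2) that] by simp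
  have "(\<lambda>i. \<Sum>\<gamma>\<in>y ` J. of_int (m \<gamma>) * fst \<gamma> i, \<lambda>i. \<Prod>\<gamma>\<in>y ` J. snd \<gamma> i powi m \<gamma>) \<in> \<Gamma>"
    using finprod_closed[of "y ` J" m] assms by simp
  moreover have "(\<Sum>\<gamma>\<in>y ` J. of_int (m \<gamma>) * fst \<gamma> i) = (\<Sum>j\<in>J. of_int (\<mu> j) * fst (y j) i)" for i
    unfolding sum.reindex[OF assms(2)] o_def by (intro sum.cong) (auto simp: my)
  moreover have "(\<Prod>\<gamma>\<in>y ` J. snd \<gamma> i powi m \<gamma>) = (\<Prod>j\<in>J. snd (y j) i powi \<mu> j)" for i
    unfolding prod.reindex[OF assms(2)] o_def by (intro prod.cong) (auto simp: my)
  ultimately show ?thesis by simp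
qed

lemma WI_idx:
  assumes "WI E" "finite J" "inj_on y J" "y ` J \<subseteq> E"
    and "\<forall>i. (\<Sum>j\<in>J. of_int (\<mu> j) * fst (y j) i) = 0" "\<forall>i. (\<Prod>j\<in>J. snd (y j) i powi \<mu> j) = 1"
  shows "\<forall>j\<in>J. int p dvd \<mu> j"
proof -
  define m where "m = (\<lambda>\<gamma>. \<mu> (the_inv_into J y \<gamma>))"
  have my: "m (y j) = \<mu> j" if "j \<in> J" for j unfolding m_def using the_inv_into_f_f[OF assms(3) that] by simp
  have EG: "E \<subseteq> \<Gamma>" using assms(1) unfolding WI_def by simp
  have fs: "(\<Sum>\<gamma>\<in>y ` J. of_int (m \<gamma>) * fst \<gamma> i) = (\<Sum>j\<in>J. of_int (\<mu> j) * fst (y j) i)" for i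
    unfolding sum.reindex[OF assms(3)] o_def by (intro sum.cong) (auto simp: my)
  have ps: "(\<Prod>\<gamma>\<in>y ` J. snd \<gamma> i powi m \<gamma>) = (\<Prod>j\<in>J. snd (y j) i powi \<mu> j)" for i
    unfolding prod.reindex[OF assms(3)] o_def by (intro prod.cong) (auto simp: my)
  have "finprod Gm (\<lambda>\<gamma>. \<gamma> [^]\<^bsub>Gm\<^esub> m \<gamma>) (y ` J) = \<one>\<^bsub>Gm\<^esub>"
    using finprod_formula[of "y ` J" m] assms EG fs ps by auto
  hence "\<forall>\<gamma>\<in>y ` J. int p dvd m \<gamma>" using assms(1,2,4) unfolding WI_def by blast
  thus ?thesis using my by auto
qed


lemma key:
  assumes WIE: "WI E" and infE: "infinite E"
  shows "condA \<or> condB"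
proof (rule ccontr)
  assume nc: "\<not> (condA \<or> condB)"
  obtain S1 where S1: "finite S1" "\<And>x i. x \<in> \<Gamma> \<Longrightarrow> i \<notin> S1 \<Longrightarrow> fst x i = 0"
    using nc unfolding condA_def by blast
  obtain S2 where S2: "finite S2"
    "\<And>x i. x \<in> \<Gamma> \<Longrightarrow> fst x = (\<lambda>_. 0) \<Longrightarrow> (\<forall>i. snd x i ^ p = 1) \<Longrightarrow> i \<notin> S2 \<Longrightarrow> snd x i = 1"
    using nc unfolding condB_def by blast
  have EG: "E \<subseteq> \<Gamma>" using WIE unfolding WI_def by simp
  define D where "D = card S1 + 1"
  define N where "N = card S2 + 1"
  obtain f :: "nat \<Rightarrow> _" where f: "inj f" "range f \<subseteq> E" using infinite_countable_subset[OF infE] by blast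
  define y where "y = (\<lambda>(b, r). f (b * D + r))"
  define J where "J = {..<N} \<times> {..<D}"
  have finJ: "finite J" unfolding J_def by simp
  have injy: "inj_on y J"
  proof (rule inj_onI, clarify)
    fix b r b' r' assume "(b, r) \<in> J" "(b', r') \<in> J" "y (b, r) = y (b', r')"
    hence r: "r < D" "r' < D" and e: "b * D + r = b' * D + r'" using f(1) unfolding J_def y_def by (auto dest: injD)
    have "(b * D + r) div D = b" "(b * D + r) mod D = r" using r by auto
    moreover have "(b' * D + r') div D = b'" "(b' * D + r') mod D = r'" using r by auto
    ultimately show "b = b' \<and> r = r'" using e by metis
  qed
  have yE: "y j \<in> E" for j unfolding y_def using f(2) by (auto split: prod.splits)
  have yG: "y j \<in> \<Gamma>" for j using yE EG by blast
  have "\<forall>b. \<exists>m::nat \<Rightarrow> int. b < N \<longrightarrow> (\<exists>r\<in>{..<D}. \<not> int p dvd m r) \<and>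
      (\<forall>i. (\<Sum>r\<in>{..<D}. of_int (m r) * fst (y (b, r)) i) = 0)"
  proof (intro allI)
    fix b
    have "\<exists>m::nat \<Rightarrow> int. (\<exists>r\<in>{..<D}. m r \<noteq> 0) \<and> (\<forall>i. (\<Sum>r\<in>{..<D}. of_int (m r) * fst (y (b, r)) i) = 0)"
      by (rule dep_int[OF S1(1)]) (auto simp: D_def intro: S1(2)[OF yG])
    then obtain m :: "nat \<Rightarrow> int" where "\<exists>r\<in>{..<D}. m r \<noteq> 0" "\<forall>i. (\<Sum>r\<in>{..<D}. of_int (m r) * fst (y (b, r)) i) = 0"
      by blast
    from dep_int_p[OF p_gt1 _ this] show "\<exists>m::nat \<Rightarrow> int. b < N \<longrightarrow> (\<exists>r\<in>{..<D}. \<not> int p dvd m r) \<and>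
      (\<forall>i. (\<Sum>r\<in>{..<D}. of_int (m r) * fst (y (b, r)) i) = 0)" by blast
  qed
  then obtain M :: "nat \<Rightarrow> nat \<Rightarrow> int" where M: "\<And>b. b < N \<Longrightarrow> (\<exists>r\<in>{..<D}. \<not> int p dvd M b r) \<and>
      (\<forall>i. (\<Sum>r\<in>{..<D}. of_int (M b r) * fst (y (b, r)) i) = 0)"
    by metis
  define h where "h = (\<lambda>b i. \<Prod>r<D. snd (y (b, r)) i powi M b r)"
  define \<mu> where "\<mu> = (\<lambda>c::nat \<Rightarrow> nat. \<lambda>(b, r). int (c b) * M b r)"
  have F1: "(\<Sum>j\<in>J. of_int (\<mu> c j) * fst (y j) i) = 0" for c i
  proof -
    have "(\<Sum>j\<in>J. of_int (\<mu> c j) * fst (y j) i) = (\<Sum>b<N. \<Sum>r<D. of_int (\<mu> c (b, r)) * fst (y (b, r)) i)"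
      unfolding J_def by (simp add: sum.cartesian_product split_def)
    also have "\<dots> = (\<Sum>b<N. of_nat (c b) * (\<Sum>r<D. of_int (M b r) * fst (y (b, r)) i))"
      unfolding \<mu>_def by (simp add: sum_distrib_left mult.assoc)
    also have "\<dots> = 0" using M by (intro sum.neutral) auto
    finally show ?thesis .
  qed
  have F2: "(\<Prod>j\<in>J. snd (y j) i powi \<mu> c j) = (\<Prod>b<N. h b i ^ c b)" for c i
  proof -
    have "(\<Prod>j\<in>J. snd (y j) i powi \<mu> c j) = (\<Prod>b<N. \<Prod>r<D. snd (y (b, r)) i powi \<mu> c (b, r))"
      unfolding J_def by (simp add: prod.cartesian_product split_def)
    also have "\<dots> = (\<Prod>b<N. \<Prod>r<D. (snd (y (b, r)) i powi M b r) ^ c b)"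
    proof (intro prod.cong refl)
      fix b r
      have "snd (y (b, r)) i powi (int (c b) * M b r) = snd (y (b, r)) i powi (M b r * int (c b))"
        by (simp add: mult.commute)
      also have "\<dots> = (snd (y (b, r)) i powi M b r) ^ c b" by (simp add: power_int_mult power_int_of_nat)
      finally show "snd (y (b, r)) i powi \<mu> c (b, r) = (snd (y (b, r)) i powi M b r) ^ c b"
        unfolding \<mu>_def by simp
    qed
    also have "\<dots> = (\<Prod>b<N. h b i ^ c b)" unfolding h_def by (simp add: prod_power_distrib)
    finally show ?thesis .
  qed
  have yJE: "y ` J \<subseteq> E" using yE by auto
  have yJG: "y ` J \<subseteq> \<Gamma>" using yG by auto
  obtain K0 where K0: "\<forall>j\<in>J. \<forall>i. snd (y j) i ^ (p ^ K0) = 1"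
  proof -
    have "\<forall>j\<in>J. \<exists>k. \<forall>i. snd (y j) i ^ (p ^ k) = 1" using tors_elem yG by blast
    thus ?thesis using common_bound[OF finJ, of "\<lambda>j k. \<forall>i. snd (y j) i ^ (p ^ k) = 1"] pow_pp_mono that
      by blast
  qed
  define K where "K = K0 + 1"
  have K: "\<forall>j\<in>J. \<forall>i. snd (y j) i ^ (p ^ K) = 1" using K0 pow_pp_mono unfolding K_def by (meson le_add1)
  have H1: "h b i ^ (p ^ K) = 1" if "b < N" for b i
  proof -
    have "h b i ^ (p ^ K) = (\<Prod>r<D. (snd (y (b, r)) i ^ (p ^ K)) powi M b r)"
      unfolding h_def by (simp add: prod_power_distrib powi_pow_comm)
    also have "\<dots> = 1" using K that unfolding J_def by (intro prod.neutral) auto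
    finally show ?thesis .
  qed
  have H2: "\<forall>b<N. p dvd c b" if c: "\<forall>i. (\<Prod>b<N. h b i ^ c b) = 1" for c
  proof (intro allI impI)
    fix b assume b: "b < N"
    have "\<forall>j\<in>J. int p dvd \<mu> c j"
      by (rule WI_idx[OF WIE finJ injy yJE]) (use F1 F2 c in auto)
    hence dv: "int p dvd int (c b) * M b r" if "r < D" for r using b that unfolding J_def \<mu>_def by auto
    obtain r where r: "r < D" "\<not> int p dvd M b r" using M[OF b] by auto
    have "Factorial_Ring.prime (int p)" using pp by simp
    hence "int p dvd int (c b)" using dv[OF r(1)] r(2) prime_dvd_mult_iff by blast
    thus "p dvd c b" by simp
  qed
  have H3: "\<forall>i. i \<notin> S2 \<longrightarrow> (\<Prod>b<N. h b i ^ c b) = 1" if c: "\<forall>i. (\<Prod>b<N. h b i ^ c b) ^ p = 1" for c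
  proof -
    have "(\<lambda>i. \<Sum>j\<in>J. of_int (\<mu> c j) * fst (y j) i, \<lambda>i. \<Prod>j\<in>J. snd (y j) i powi \<mu> c j) \<in> \<Gamma>"
      by (rule idx_closed[OF finJ injy yJG])
    hence g: "(\<lambda>_. 0, \<lambda>i. \<Prod>b<N. h b i ^ c b) \<in> \<Gamma>" using F1 F2 by simp
    show ?thesis using S2(2)[OF g] c by simp
  qed
  have "N \<le> card S2" by (rule count_lemma[OF p_gt1 _ S2(1) H1 H2 H3]) (simp add: K_def)
  thus False unfolding N_def by simp
qed

end

theorem proposition4p4:
  fixes p :: nat and B1 :: "'a set" and B2 :: "'b set"
    and \<Gamma> :: "(('a \<Rightarrow> rat) \<times> ('b \<Rightarrow> complex)) set"
  assumes "Factorial_Ring.prime p"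
    and "subgroup \<Gamma> (mixed_sum_group p B1 B2)"
    and "countable \<Gamma>" and "infinite \<Gamma>"
  shows "(\<exists>E \<subseteq> \<Gamma>. infinite E \<and> NPR ((mixed_sum_group p B1 B2)\<lparr>carrier := \<Gamma>\<rparr>) p E)
     \<longleftrightarrow> (\<exists>E \<subseteq> \<Gamma>. infinite E \<and> independent_set ((mixed_sum_group p B1 B2)\<lparr>carrier := \<Gamma>\<rparr>) E)"
proof -
  interpret msgctx p B1 B2 \<Gamma> by (rule msgctx.intro[OF assms(1,2)])
  have rich: "\<exists>E\<subseteq>\<Gamma>. infinite E \<and> NPR Gm p E \<and> independent_set Gm E" if "condA \<or> condB"
    using that condA_rich condB_rich by blast
  show ?thesis
  proof
    assume "\<exists>E\<subseteq>\<Gamma>. infinite E \<and> NPR Gm p E"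
    then obtain E where E: "infinite E" "NPR Gm p E" by blast
    have "condA \<or> condB" by (rule key[OF NPR_WI[OF E(2)] E(1)])
    thus "\<exists>E\<subseteq>\<Gamma>. infinite E \<and> independent_set Gm E" using rich by blast
  next
    assume "\<exists>E\<subseteq>\<Gamma>. infinite E \<and> independent_set Gm E"
    then obtain E where E: "infinite E" "independent_set Gm E" by blast
    have "infinite (E - {(\<lambda>_. 0, \<lambda>_. 1)})" using E(1) by simp
    hence "condA \<or> condB" by (rule key[OF indep_WI[OF E(2)]])
    thus "\<exists>E\<subseteq>\<Gamma>. infinite E \<and> NPR Gm p E" using rich by blast
  qed
qed

end
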